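(* Let $\beta,\delta\in(0,1)$, $K>0$, $T>0$, and consider the controlled system $$f'=\tfrac12 fm\beta L-\delta f-\eta_1(t)f,\qquad m'=\tfrac12 fm\beta L-\delta m-\eta_2(t)m,\qquad L=1-\frac{f+m}{K},$$ with initial conditions $f(t_0)=f_0$, $m(t_0)=m_0$. The admissible set is $U_4=\{(\eta_1,\eta_2)$ measurable, $0\le\eta_1,\eta_2\le1\}$ and the objective is $J_4=\int_0^T\big(-(f+m)-\tfrac12(\eta_1^2+\eta_2^2)\big)dt$. An optimal control $(\eta_1^*,\eta_2^* )\in U_4$ maximizing $J_4$ is characterized by $$\eta_1^*(t)=\min(1,\max(0,-f\lambda_1)),\qquad \eta_2^*(t)=\min(1,\max(0,-m\lambda_2)).$$ Here $(f,m)$ is the corresponding state and $(\lambda_1,\lambda_2)$ solves $$\lambda_1'=1-\lambda_1\Big[\tfrac{m\beta}{2}L-\tfrac{fm\beta}{2K}-\delta-\eta_1\Big]-\lambda_2\Big[\tfrac{m\beta}{2}L-\tfrac{fm\beta}{2K}\Big],$$ $$\lambda_2'=1-\lambda_1\Big[\tfrac{f\beta}{2}L-\tfrac{fm\beta}{2K}\Big]-\lambda_2\Big[\tfrac{f\beta}{2}L-\tfrac{fm\beta}{2K}-\delta-\eta_2\Big],$$ with $\lambda_1(T)=\lambda_2(T)=0$.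
   Context: $f,m$ are female and male densities, and $\eta_1,\eta_2$ are female and male harvesting rates. The characterization is the necessary condition from Pontryagin's maximum principle with Hamiltonian $H_4=-(f+m)-\tfrac12(\eta_1^2+\eta_2^2)+\lambda_1f'+\lambda_2m'$. *)

theory Defs
  imports "HOL-Analysis.Analysis"
begin

definition Lfac :: "real \<Rightarrow> real \<Rightarrow> real \<Rightarrow> real" where
  "Lfac K f m = 1 - (f + m) / K"

definition rhs_f :: "real \<Rightarrow> real \<Rightarrow> real \<Rightarrow> real \<Rightarrow> real \<Rightarrow> real \<Rightarrow> real" where
  "rhs_f \<beta> \<delta> K e1 f m = f * m * \<beta> * Lfac K f m / 2 - \<delta> * f - e1 * f"

definition rhs_m :: "real \<Rightarrow> real \<Rightarrow> real \<Rightarrow> real \<Rightarrow> real \<Rightarrow> real \<Rightarrow> real" where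
  "rhs_m \<beta> \<delta> K e2 f m = f * m * \<beta> * Lfac K f m / 2 - \<delta> * m - e2 * m"

definition admissible :: "real \<Rightarrow> (real \<Rightarrow> real) \<Rightarrow> bool" where
  "admissible T \<eta> \<longleftrightarrow> set_borel_measurable lebesgue {0..T} \<eta> \<and>
     (\<forall>t\<in>{0..T}. 0 \<le> \<eta> t \<and> \<eta> t \<le> 1)"

text \<open>(f,m) is a (Caratheodory) solution of the state system on [0,T] with
  f(0)=f0, m(0)=m0 under the controls eta1, eta2.\<close>
definition is_state :: "real \<Rightarrow> real \<Rightarrow> real \<Rightarrow> real \<Rightarrow> real \<Rightarrow> real \<Rightarrow>
    (real \<Rightarrow> real) \<Rightarrow> (real \<Rightarrow> real) \<Rightarrow> (real \<Rightarrow> real) \<Rightarrow> (real \<Rightarrow> real) \<Rightarrow> bool" where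
  "is_state \<beta> \<delta> K T f0 m0 \<eta>1 \<eta>2 f m \<longleftrightarrow>
     continuous_on {0..T} f \<and> continuous_on {0..T} m \<and>
     (\<forall>t\<in>{0..T}. ((\<lambda>s. rhs_f \<beta> \<delta> K (\<eta>1 s) (f s) (m s)) has_integral (f t - f0)) {0..t}) \<and>
     (\<forall>t\<in>{0..T}. ((\<lambda>s. rhs_m \<beta> \<delta> K (\<eta>2 s) (f s) (m s)) has_integral (m t - m0)) {0..t})"

definition J4 :: "real \<Rightarrow> (real \<Rightarrow> real) \<Rightarrow> (real \<Rightarrow> real) \<Rightarrow> (real \<Rightarrow> real) \<Rightarrow> (real \<Rightarrow> real) \<Rightarrow> real" where
  "J4 T \<eta>1 \<eta>2 f m = integral {0..T} (\<lambda>t. - (f t + m t) - ((\<eta>1 t)\<^sup>2 + (\<eta>2 t)\<^sup>2) / 2)"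

text \<open>Right-hand sides of the adjoint equations (lambda' = - dH/d state).\<close>
definition adj1 :: "real \<Rightarrow> real \<Rightarrow> real \<Rightarrow> real \<Rightarrow> real \<Rightarrow> real \<Rightarrow> real \<Rightarrow> real \<Rightarrow> real" where
  "adj1 \<beta> \<delta> K e1 f m l1 l2 =
     1 - l1 * (m * \<beta> / 2 * Lfac K f m - f * m * \<beta> / (2 * K) - \<delta> - e1)
       - l2 * (m * \<beta> / 2 * Lfac K f m - f * m * \<beta> / (2 * K))"

definition adj2 :: "real \<Rightarrow> real \<Rightarrow> real \<Rightarrow> real \<Rightarrow> real \<Rightarrow> real \<Rightarrow> real \<Rightarrow> real \<Rightarrow> real" where
  "adj2 \<beta> \<delta> K e2 f m l1 l2 =
     1 - l1 * (f * \<beta> / 2 * Lfac K f m - f * m * \<beta> / (2 * K))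
       - l2 * (f * \<beta> / 2 * Lfac K f m - f * m * \<beta> / (2 * K) - \<delta> - e2)"

end

theory Submission
  imports Defs
begin

definition clampT :: "real \<Rightarrow> real \<Rightarrow> real" where "clampT T t = max 0 (min T t)"

lemma clampT_in: "0 \<le> T \<Longrightarrow> clampT T t \<in> {0..T}"
  by (auto simp: clampT_def)

lemma clampT_id: "t \<in> {0..T} \<Longrightarrow> clampT T t = t"
  by (auto simp: clampT_def)

lemma continuous_clampT: "continuous_on UNIV (clampT T)"
  unfolding clampT_def by (intro continuous_intros)

definition Hop :: "(real \<Rightarrow> real\<times>real \<Rightarrow> real\<times>real) \<Rightarrow> real\<times>real \<Rightarrow> real \<Rightarrow> (real \<Rightarrow> real\<times>real) \<Rightarrow> real \<Rightarrow> real\<times>real" where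
 "Hop G x0 c u \<tau> = exp (- c * \<tau>) *\<^sub>R (x0 + integral {0..\<tau>} (\<lambda>s. G s (exp (c * s) *\<^sub>R u s)))"

lemma Hop_cont:
  assumes integ: "\<And>x. continuous_on {0..T} x \<Longrightarrow> (\<lambda>s. G s (x s)) integrable_on {0..T}"
    and u: "continuous_on {0..T} u"
  shows "continuous_on {0..T} (Hop G x0 c u)"
proof -
  have "continuous_on {0..T} (\<lambda>s. exp (c * s) *\<^sub>R u s)"
    by (intro continuous_intros u)
  then have "(\<lambda>s. G s (exp (c * s) *\<^sub>R u s)) integrable_on {0..T}" by (rule integ)
  then have "continuous_on {0..T} (\<lambda>\<tau>. integral {0..\<tau>} (\<lambda>s. G s (exp (c * s) *\<^sub>R u s)))"
    by (rule indefinite_integral_continuous_1)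
  then show ?thesis unfolding Hop_def by (intro continuous_intros)
qed

lemma exp_has_integral:
  fixes c \<tau> :: real
  assumes "c > 0" "0 \<le> \<tau>"
  shows "((\<lambda>s. exp (c * s)) has_integral (exp (c * \<tau>) - 1)/c) {0..\<tau>}"
proof -
  have "((\<lambda>s. exp (c * s)) has_integral (exp (c * \<tau>)/c - exp (c * 0)/c)) {0..\<tau>}"
  proof (rule fundamental_theorem_of_calculus[where f="\<lambda>s. exp (c * s)/c"])
    show "0 \<le> \<tau>" by fact
    fix x assume "x \<in> {0..\<tau>}"
    show "((\<lambda>s. exp (c * s)/c) has_vector_derivative exp (c * x)) (at x within {0..\<tau>})"
      using assms by (auto intro!: derivative_eq_intros simp: has_real_derivative_iff_has_vector_derivative[symmetric])
  qed
  then show ?thesis by (simp add: diff_divide_distrib)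
qed

lemma Hop_contr:
  assumes lip: "\<And>t x y. t \<in> {0..T} \<Longrightarrow> norm (G t x - G t y) \<le> Lc * norm (x - y)"
    and Lc: "0 \<le> Lc" and c: "0 < c"
    and integ: "\<And>x. continuous_on {0..T} x \<Longrightarrow> (\<lambda>s. G s (x s)) integrable_on {0..T}"
    and u: "continuous_on {0..T} u" and v: "continuous_on {0..T} v"
    and D: "\<And>s. s \<in> {0..T} \<Longrightarrow> norm (u s - v s) \<le> D"
    and tau: "\<tau> \<in> {0..T}"
  shows "norm (Hop G x0 c u \<tau> - Hop G x0 c v \<tau>) \<le> Lc / c * D"
proof -
  have D0: "0 \<le> D" using D[of 0] tau by (auto intro: order_trans[OF norm_ge_zero])
  have iu: "(\<lambda>s. G s (exp (c * s) *\<^sub>R u s)) integrable_on {0..\<tau>}"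
    by (rule integrable_on_subinterval[OF integ]) (use tau in \<open>auto intro!: continuous_intros u\<close>)
  have iv: "(\<lambda>s. G s (exp (c * s) *\<^sub>R v s)) integrable_on {0..\<tau>}"
    by (rule integrable_on_subinterval[OF integ]) (use tau in \<open>auto intro!: continuous_intros v\<close>)
  have eint: "((\<lambda>s. Lc * D * exp (c * s)) has_integral Lc * D * ((exp (c * \<tau>) - 1)/c)) {0..\<tau>}"
    using exp_has_integral[OF c, of \<tau>] tau by (intro has_integral_mult_right) auto
  have "norm (integral {0..\<tau>} (\<lambda>s. G s (exp (c * s) *\<^sub>R u s) - G s (exp (c * s) *\<^sub>R v s)))
        \<le> integral {0..\<tau>} (\<lambda>s. Lc * D * exp (c * s))"
  proof (rule integral_norm_bound_integral)
    show "(\<lambda>s. G s (exp (c * s) *\<^sub>R u s) - G s (exp (c * s) *\<^sub>R v s)) integrable_on {0..\<tau>}"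
      using iu iv by (rule integrable_diff)
    show "(\<lambda>s. Lc * D * exp (c * s)) integrable_on {0..\<tau>}" using eint by blast
    fix s assume s: "s \<in> {0..\<tau>}"
    then have sT: "s \<in> {0..T}" using tau by auto
    have "norm (G s (exp (c * s) *\<^sub>R u s) - G s (exp (c * s) *\<^sub>R v s)) \<le> Lc * norm (exp (c * s) *\<^sub>R u s - exp (c * s) *\<^sub>R v s)"
      using lip sT by blast
    also have "\<dots> = Lc * (exp (c * s) * norm (u s - v s))"
      by (simp add: scaleR_diff_right[symmetric])
    also have "\<dots> \<le> Lc * (exp (c * s) * D)"
      using D[OF sT] Lc by (intro mult_left_mono) auto
    finally show "norm (G s (exp (c * s) *\<^sub>R u s) - G s (exp (c * s) *\<^sub>R v s)) \<le> Lc * D * exp (c * s)"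
      by (simp add: algebra_simps)
  qed
  also have "\<dots> = Lc * D * ((exp (c * \<tau>) - 1)/c)" using eint by (rule integral_unique)
  finally have N: "norm (integral {0..\<tau>} (\<lambda>s. G s (exp (c * s) *\<^sub>R u s) - G s (exp (c * s) *\<^sub>R v s))) \<le> Lc * D * ((exp (c * \<tau>) - 1)/c)" .
  have eq: "Hop G x0 c u \<tau> - Hop G x0 c v \<tau> = exp (- c * \<tau>) *\<^sub>R integral {0..\<tau>} (\<lambda>s. G s (exp (c * s) *\<^sub>R u s) - G s (exp (c * s) *\<^sub>R v s))"
    unfolding Hop_def integral_diff[OF iu iv] by (simp add: algebra_simps)
  have "norm (Hop G x0 c u \<tau> - Hop G x0 c v \<tau>) = exp (- c * \<tau>) * norm (integral {0..\<tau>} (\<lambda>s. G s (exp (c * s) *\<^sub>R u s) - G s (exp (c * s) *\<^sub>R v s)))"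
    unfolding eq by simp
  also have "\<dots> \<le> exp (- c * \<tau>) * (Lc * D * ((exp (c * \<tau>) - 1)/c))"
    using N by (intro mult_left_mono) auto
  also have "\<dots> = Lc * D / c * (1 - exp (- c * \<tau>))"
    by (simp add: field_simps exp_minus)
  also have "\<dots> \<le> Lc * D / c"
    using Lc D0 c by (intro mult_left_le) auto
  finally show ?thesis by simp
qed

lemma Hop_pert:
  assumes iG: "(\<lambda>s. G s (exp (c * s) *\<^sub>R u s)) integrable_on {0..T}"
    and iG0: "(\<lambda>s. G0 s (exp (c * s) *\<^sub>R u s)) integrable_on {0..T}"
    and pert: "\<And>t y. t \<in> {0..T} \<Longrightarrow> norm (G t y - G0 t y) \<le> eps"
    and c: "0 < c" and tau: "\<tau> \<in> {0..T}"
  shows "norm (Hop G x0 c u \<tau> - Hop G0 x0 c u \<tau>) \<le> eps * T"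
proof -
  have eps: "0 \<le> eps" using pert[of 0 0] tau by (auto intro: order_trans[OF norm_ge_zero])
  have i1: "(\<lambda>s. G s (exp (c * s) *\<^sub>R u s)) integrable_on {0..\<tau>}"
    by (rule integrable_on_subinterval[OF iG]) (use tau in auto)
  have i2: "(\<lambda>s. G0 s (exp (c * s) *\<^sub>R u s)) integrable_on {0..\<tau>}"
    by (rule integrable_on_subinterval[OF iG0]) (use tau in auto)
  have N: "norm (integral {0..\<tau>} (\<lambda>s. G s (exp (c * s) *\<^sub>R u s) - G0 s (exp (c * s) *\<^sub>R u s)))
        \<le> integral {0..\<tau>} (\<lambda>s. eps)"
    by (rule integral_norm_bound_integral) (use i1 i2 tau pert in \<open>auto intro!: integrable_diff\<close>)
  have eq: "Hop G x0 c u \<tau> - Hop G0 x0 c u \<tau> = exp (- c * \<tau>) *\<^sub>R integral {0..\<tau>} (\<lambda>s. G s (exp (c * s) *\<^sub>R u s) - G0 s (exp (c * s) *\<^sub>R u s))"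
    unfolding Hop_def integral_diff[OF i1 i2] by (simp add: algebra_simps)
  have "norm (Hop G x0 c u \<tau> - Hop G0 x0 c u \<tau>) = exp (- c * \<tau>) * norm (integral {0..\<tau>} (\<lambda>s. G s (exp (c * s) *\<^sub>R u s) - G0 s (exp (c * s) *\<^sub>R u s)))"
    unfolding eq by simp
  also have "\<dots> \<le> 1 * (eps * \<tau>)"
  proof (rule mult_mono)
    show "exp (- c * \<tau>) \<le> 1" using c tau by auto
    show "norm (integral {0..\<tau>} (\<lambda>s. G s (exp (c * s) *\<^sub>R u s) - G0 s (exp (c * s) *\<^sub>R u s))) \<le> eps * \<tau>"
      using N tau by (simp add: integral_const_real mult.commute)
  qed (use eps tau in auto)
  also have "\<dots> \<le> eps * T" using eps tau by (auto intro: mult_left_mono)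
  finally show ?thesis .
qed

lemma bcontfun_clampI:
  assumes "continuous_on {0..T} h" "0 \<le> T"
  shows "(\<lambda>t. h (clampT T t)) \<in> bcontfun"
proof -
  have "continuous_on UNIV (\<lambda>t. h (clampT T t))"
    by (rule continuous_on_compose2[OF assms(1) continuous_clampT]) (use assms clampT_in in auto)
  moreover have "bounded (range (\<lambda>t. h (clampT T t)))"
  proof (rule bounded_subset)
    show "bounded (h ` {0..T})"
      by (intro compact_imp_bounded compact_continuous_image assms) auto
    show "range (\<lambda>t. h (clampT T t)) \<subseteq> h ` {0..T}" using clampT_in assms by auto
  qed
  ultimately show ?thesis by (simp add: bcontfun_def)
qed

lemma ode_fp:
  fixes G :: "real \<Rightarrow> real\<times>real \<Rightarrow> real\<times>real"
  assumes lip: "\<And>t x y. t \<in> {0..T} \<Longrightarrow> norm (G t x - G t y) \<le> Lc * norm (x - y)"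
    and Lc: "0 \<le> Lc" and T: "0 \<le> T"
    and integ: "\<And>x. continuous_on {0..T} x \<Longrightarrow> (\<lambda>s. G s (x s)) integrable_on {0..T}"
  shows "\<exists>u::real \<Rightarrow>\<^sub>C (real\<times>real). \<forall>t. apply_bcontfun u t = Hop G x0 (2*Lc+1) (apply_bcontfun u) (clampT T t)"
proof -
  define c where "c = 2*Lc+1"
  have c: "0 < c" using Lc by (simp add: c_def)
  have mem: "(\<lambda>t. Hop G x0 c (apply_bcontfun u) (clampT T t)) \<in> bcontfun" for u :: "real \<Rightarrow>\<^sub>C (real\<times>real)"
    by (intro bcontfun_clampI Hop_cont[OF integ] T) auto
  define Psi where "Psi u = Bcontfun (\<lambda>t. Hop G x0 c (apply_bcontfun u) (clampT T t))" for u :: "real \<Rightarrow>\<^sub>C (real\<times>real)"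
  have ap: "apply_bcontfun (Psi u) = (\<lambda>t. Hop G x0 c (apply_bcontfun u) (clampT T t))" for u
    unfolding Psi_def using mem by (rule Bcontfun_inverse)
  have "dist (Psi u) (Psi v) \<le> 1/2 * dist u v" for u v
  proof (rule dist_bound)
    fix t
    have "norm (Hop G x0 c (apply_bcontfun u) (clampT T t) - Hop G x0 c (apply_bcontfun v) (clampT T t)) \<le> Lc / c * dist u v"
      by (rule Hop_contr[OF lip Lc c integ]) (use clampT_in[OF T] in \<open>auto simp: dist_norm[symmetric] dist_bounded\<close>)
    also have "\<dots> \<le> 1/2 * dist u v"
      using Lc c by (intro mult_right_mono) (auto simp: c_def field_simps)
    finally show "dist (apply_bcontfun (Psi u) t) (apply_bcontfun (Psi v) t) \<le> 1/2 * dist u v"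
      by (simp add: ap dist_norm)
  qed
  then obtain u where "Psi u = u" using banach_fix_type[of "1/2" Psi] by auto
  then have "apply_bcontfun u t = Hop G x0 c (apply_bcontfun u) (clampT T t)" for t
    using ap[of u] by metis
  then show ?thesis unfolding c_def by blast
qed

lemma ode_exists:
  fixes G :: "real \<Rightarrow> real\<times>real \<Rightarrow> real\<times>real"
  assumes lip: "\<And>t x y. t \<in> {0..T} \<Longrightarrow> norm (G t x - G t y) \<le> Lc * norm (x - y)"
    and Lc: "0 \<le> Lc" and T: "0 \<le> T"
    and integ: "\<And>x. continuous_on {0..T} x \<Longrightarrow> (\<lambda>s. G s (x s)) integrable_on {0..T}"
  shows "\<exists>x. continuous_on {0..T} x \<and> (\<forall>t\<in>{0..T}. ((\<lambda>s. G s (x s)) has_integral (x t - x0)) {0..t})"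
proof -
  define c where "c = 2*Lc+1"
  obtain u :: "real \<Rightarrow>\<^sub>C (real\<times>real)" where u: "\<And>t. apply_bcontfun u t = Hop G x0 c (apply_bcontfun u) (clampT T t)"
    using ode_fp[OF lip Lc T integ, of x0] unfolding c_def by blast
  define x where "x s = exp (c * s) *\<^sub>R apply_bcontfun u s" for s
  have xc: "continuous_on {0..T} x" unfolding x_def by (intro continuous_intros) auto
  have "((\<lambda>s. G s (x s)) has_integral (x t - x0)) {0..t}" if t: "t \<in> {0..T}" for t
  proof -
    have i: "(\<lambda>s. G s (x s)) integrable_on {0..t}"
      by (rule integrable_on_subinterval[OF integ[OF xc]]) (use t in auto)
    have "x t = x0 + integral {0..t} (\<lambda>s. G s (x s))"
      using u[of t] t by (simp add: x_def Hop_def clampT_id exp_minus field_simps flip: exp_add)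
    then show ?thesis using i by (simp add: has_integral_integral)
  qed
  then show ?thesis using xc by blast
qed

lemma ode_close:
  fixes G G0 :: "real \<Rightarrow> real\<times>real \<Rightarrow> real\<times>real"
  assumes lip: "\<And>t x y. t \<in> {0..T} \<Longrightarrow> norm (G t x - G t y) \<le> Lc * norm (x - y)"
    and Lc: "0 \<le> Lc" and T: "0 \<le> T"
    and integ: "\<And>x. continuous_on {0..T} x \<Longrightarrow> (\<lambda>s. G s (x s)) integrable_on {0..T}"
    and xsc: "continuous_on {0..T} xs"
    and xsi: "\<And>t. t \<in> {0..T} \<Longrightarrow> ((\<lambda>s. G0 s (xs s)) has_integral (xs t - xi)) {0..t}"
    and pert: "\<And>t y. t \<in> {0..T} \<Longrightarrow> norm (G t y - G0 t y) \<le> eps"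
  shows "\<exists>x. continuous_on {0..T} x \<and> (\<forall>t\<in>{0..T}. ((\<lambda>s. G s (x s)) has_integral (x t - xi)) {0..t})
            \<and> (\<forall>t\<in>{0..T}. norm (x t - xs t) \<le> 2 * eps * T * exp ((2*Lc+1) * T))"
proof -
  define c where "c = 2*Lc+1"
  have c: "0 < c" using Lc by (simp add: c_def)
  obtain u :: "real \<Rightarrow>\<^sub>C (real\<times>real)" where u: "\<And>t. apply_bcontfun u t = Hop G xi c (apply_bcontfun u) (clampT T t)"
    using ode_fp[OF lip Lc T integ, of xi] unfolding c_def by blast
  define x where "x s = exp (c * s) *\<^sub>R apply_bcontfun u s" for s
  have xc: "continuous_on {0..T} x" unfolding x_def by (intro continuous_intros) auto
  have sol: "((\<lambda>s. G s (x s)) has_integral (x t - xi)) {0..t}" if t: "t \<in> {0..T}" for t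
  proof -
    have i: "(\<lambda>s. G s (x s)) integrable_on {0..t}"
      by (rule integrable_on_subinterval[OF integ[OF xc]]) (use t in auto)
    have "x t = xi + integral {0..t} (\<lambda>s. G s (x s))"
      using u[of t] t by (simp add: x_def Hop_def clampT_id exp_minus field_simps flip: exp_add)
    then show ?thesis using i by (simp add: has_integral_integral)
  qed
  have hc: "continuous_on {0..T} (\<lambda>\<tau>. exp (- c * \<tau>) *\<^sub>R xs \<tau>)"
    by (intro continuous_intros xsc)
  define u0 where "u0 = Bcontfun (\<lambda>t. exp (- c * clampT T t) *\<^sub>R xs (clampT T t))"
  have u0a: "apply_bcontfun u0 = (\<lambda>t. exp (- c * clampT T t) *\<^sub>R xs (clampT T t))"
    unfolding u0_def by (rule Bcontfun_inverse[OF bcontfun_clampI[OF hc T]])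
  have u0s: "exp (c * s) *\<^sub>R apply_bcontfun u0 s = xs s" if "s \<in> {0..T}" for s
    using that by (simp add: u0a clampT_id flip: exp_add)
  have iG: "(\<lambda>s. G s (exp (c * s) *\<^sub>R apply_bcontfun u0 s)) integrable_on {0..T}"
    by (rule integ) (intro continuous_intros; auto)
  have iG0: "(\<lambda>s. G0 s (exp (c * s) *\<^sub>R apply_bcontfun u0 s)) integrable_on {0..T}"
  proof -
    have "(\<lambda>s. G0 s (xs s)) integrable_on {0..T}" using xsi[of T] T by (auto intro: has_integral_integrable)
    moreover have "(\<lambda>s. G0 s (exp (c * s) *\<^sub>R apply_bcontfun u0 s)) integrable_on {0..T} \<longleftrightarrow> (\<lambda>s. G0 s (xs s)) integrable_on {0..T}"
      by (rule integrable_cong) (simp add: u0s)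
    ultimately show ?thesis by simp
  qed
  have u0fix: "apply_bcontfun u0 t = Hop G0 xi c (apply_bcontfun u0) (clampT T t)" for t
  proof -
    define \<tau> where "\<tau> = clampT T t"
    have tau: "\<tau> \<in> {0..T}" unfolding \<tau>_def using clampT_in[OF T] .
    have "integral {0..\<tau>} (\<lambda>s. G0 s (exp (c * s) *\<^sub>R apply_bcontfun u0 s)) = integral {0..\<tau>} (\<lambda>s. G0 s (xs s))"
      by (rule integral_cong) (use tau u0s in auto)
    also have "\<dots> = xs \<tau> - xi" using xsi[OF tau] by (rule integral_unique)
    finally show ?thesis unfolding Hop_def \<tau>_def[symmetric] by (simp add: u0a \<tau>_def)
  qed
  define d where "d = dist u u0"
  have "d \<le> 1/2 * d + eps * T"
    unfolding d_def
  proof (rule dist_bound)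
    fix t
    define \<tau> where "\<tau> = clampT T t"
    have tau: "\<tau> \<in> {0..T}" unfolding \<tau>_def using clampT_in[OF T] .
    have "norm (Hop G xi c (apply_bcontfun u) \<tau> - Hop G xi c (apply_bcontfun u0) \<tau>) \<le> Lc / c * dist u u0"
      by (rule Hop_contr[OF lip Lc c integ]) (use tau in \<open>auto simp: dist_norm[symmetric] dist_bounded\<close>)
    also have "\<dots> \<le> 1/2 * dist u u0"
      using Lc c by (intro mult_right_mono) (auto simp: c_def field_simps)
    finally have 1: "norm (Hop G xi c (apply_bcontfun u) \<tau> - Hop G xi c (apply_bcontfun u0) \<tau>) \<le> 1/2 * dist u u0" .
    have 2: "norm (Hop G xi c (apply_bcontfun u0) \<tau> - Hop G0 xi c (apply_bcontfun u0) \<tau>) \<le> eps * T"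
      by (rule Hop_pert[where G=G and G0=G0 and u="apply_bcontfun u0" and c=c and T=T, OF iG iG0 pert c tau])
    have "dist (apply_bcontfun u t) (apply_bcontfun u0 t) = norm (Hop G xi c (apply_bcontfun u) \<tau> - Hop G0 xi c (apply_bcontfun u0) \<tau>)"
      using u[of t] u0fix[of t] by (simp add: dist_norm \<tau>_def)
    also have "\<dots> \<le> norm (Hop G xi c (apply_bcontfun u) \<tau> - Hop G xi c (apply_bcontfun u0) \<tau>) + norm (Hop G xi c (apply_bcontfun u0) \<tau> - Hop G0 xi c (apply_bcontfun u0) \<tau>)"
      using norm_triangle_ineq[of "Hop G xi c (apply_bcontfun u) \<tau> - Hop G xi c (apply_bcontfun u0) \<tau>" "Hop G xi c (apply_bcontfun u0) \<tau> - Hop G0 xi c (apply_bcontfun u0) \<tau>"] by simp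
    also have "\<dots> \<le> 1/2 * dist u u0 + eps * T" using 1 2 by simp
    finally show "dist (apply_bcontfun u t) (apply_bcontfun u0 t) \<le> 1/2 * dist u u0 + eps * T" .
  qed
  then have d: "d \<le> 2 * eps * T" by simp
  have "norm (x t - xs t) \<le> 2 * eps * T * exp (c * T)" if t: "t \<in> {0..T}" for t
  proof -
    have "x t - xs t = exp (c * t) *\<^sub>R (apply_bcontfun u t - apply_bcontfun u0 t)"
      using u0s[OF t] by (simp add: x_def scaleR_diff_right)
    then have "norm (x t - xs t) = exp (c * t) * dist (apply_bcontfun u t) (apply_bcontfun u0 t)"
      by (simp add: dist_norm)
    also have "\<dots> \<le> exp (c * T) * d"
    proof (rule mult_mono)
      show "exp (c * t) \<le> exp (c * T)" using t c by auto
      show "dist (apply_bcontfun u t) (apply_bcontfun u0 t) \<le> d" unfolding d_def by (rule dist_bounded)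
    qed (auto simp: d_def)
    also have "\<dots> \<le> exp (c * T) * (2 * eps * T)" using d by (intro mult_left_mono) auto
    finally show ?thesis by (simp add: mult_ac)
  qed
  then show ?thesis using xc sol unfolding c_def by blast
qed

lemma reflect_has_integral:
  fixes f :: "real \<Rightarrow> 'a::euclidean_space"
  assumes "(f has_integral i) {a..b}" "a \<le> b"
  shows "((\<lambda>x. f (T - x)) has_integral i) {T-b..T-a}"
proof -
  have 1: "((\<lambda>x. f ((-1) *\<^sub>R x + T)) has_integral (1 / (\<bar>-1\<bar> ^ DIM(real))) *\<^sub>R i) ((\<lambda>x. (1 / (-1)) *\<^sub>R x + -((1 / (-1)) *\<^sub>R T)) ` cbox a b)"
    by (rule has_integral_affinity) (use assms in auto)
  have 2: "((\<lambda>x. (1 / (-1)) *\<^sub>R x + -((1 / (-1)) *\<^sub>R T)) ` cbox a b) = {T-b..T-a}"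
    using assms(2) by (simp add: image_affinity_cbox)
  have 3: "(\<lambda>x. f ((-1) *\<^sub>R x + T)) = (\<lambda>x. f (T - x))" by simp
  have 4: "(1 / (\<bar>-1\<bar> ^ DIM(real))) *\<^sub>R i = i" by simp
  show ?thesis using 1 unfolding 2 3 4 .
qed

lemma ode_backward:
  fixes A :: "real \<Rightarrow> real\<times>real \<Rightarrow> real\<times>real"
  assumes lip: "\<And>t x y. t \<in> {0..T} \<Longrightarrow> norm (A t x - A t y) \<le> Lc * norm (x - y)"
    and Lc: "0 \<le> Lc" and T: "0 \<le> T"
    and integ: "\<And>x. continuous_on {0..T} x \<Longrightarrow> (\<lambda>s. A s (x s)) integrable_on {0..T}"
  shows "\<exists>l. continuous_on {0..T} l \<and> l T = 0 \<and> (\<forall>t\<in>{0..T}. ((\<lambda>s. A s (l s)) has_integral (l T - l t)) {t..T})"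
proof -
  define G where "G s y = - A (T - s) y" for s y
  have lipG: "norm (G t x - G t y) \<le> Lc * norm (x - y)" if "t \<in> {0..T}" for t x y
    using lip[of "T - t" x y] that by (simp add: G_def norm_minus_commute)
  have integG: "(\<lambda>s. G s (y s)) integrable_on {0..T}" if y: "continuous_on {0..T} y" for y
  proof -
    have "continuous_on {0..T} (\<lambda>s. y (T - s))"
      by (rule continuous_on_compose2[OF y]) (auto intro!: continuous_intros)
    from integ[OF this] have hi: "((\<lambda>s. A s (y (T - s))) has_integral integral {0..T} (\<lambda>s. A s (y (T - s)))) {0..T}"
      by (rule integrable_integral)
    have "((\<lambda>x. A (T - x) (y (T - (T - x)))) has_integral integral {0..T} (\<lambda>s. A s (y (T - s)))) {T-T..T-0}"
      by (rule reflect_has_integral[OF hi T])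
    then have "((\<lambda>x. A (T - x) (y x)) has_integral integral {0..T} (\<lambda>s. A s (y (T - s)))) {0..T}" by simp
    then have "((\<lambda>x. - A (T - x) (y x)) has_integral - integral {0..T} (\<lambda>s. A s (y (T - s)))) {0..T}"
      by (rule has_integral_neg)
    then show ?thesis unfolding G_def integrable_on_def by blast
  qed
  obtain y where yc: "continuous_on {0..T} y" and ys: "\<And>t. t \<in> {0..T} \<Longrightarrow> ((\<lambda>s. G s (y s)) has_integral (y t - 0)) {0..t}"
    using ode_exists[OF lipG Lc T integG, of 0] by blast
  have y0: "y 0 = 0"
  proof -
    have a: "((\<lambda>s. G s (y s)) has_integral (y 0 - 0)) {0..0}" using ys[of 0] T by auto
    have b: "((\<lambda>s. G s (y s)) has_integral 0) {0..0}" by (simp add: has_integral_refl(2))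
    from has_integral_unique[OF a b] show ?thesis by simp
  qed
  define l where "l t = y (T - t)" for t
  have lc: "continuous_on {0..T} l" unfolding l_def
    by (rule continuous_on_compose2[OF yc]) (auto intro!: continuous_intros)
  have lT: "l T = 0" by (simp add: l_def y0)
  have "((\<lambda>s. A s (l s)) has_integral (l T - l t)) {t..T}" if t: "t \<in> {0..T}" for t
  proof -
    have "((\<lambda>s. G s (y s)) has_integral y (T - t)) {0..T - t}" using ys[of "T - t"] t by auto
    then have "((\<lambda>x. G (T - x) (y (T - x))) has_integral y (T - t)) {T - (T - t)..T - 0}"
      by (rule reflect_has_integral) (use t in auto)
    then have "((\<lambda>x. - A x (l x)) has_integral l t) {t..T}" by (simp add: G_def l_def)
    from has_integral_neg[OF this] have "((\<lambda>x. A x (l x)) has_integral - l t) {t..T}" by simp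
    then show ?thesis by (simp add: lT)
  qed
  then show ?thesis using lc lT by blast
qed

lemma sigma_finite_lebesgue: "sigma_finite_measure (lebesgue :: real measure)"
proof
  show "\<exists>A::real set set. countable A \<and> A \<subseteq> sets lebesgue \<and> \<Union>A = space lebesgue \<and> (\<forall>a\<in>A. emeasure lebesgue a \<noteq> \<infinity>)"
  proof (intro exI[of _ "range (\<lambda>n::nat. {- real n .. real n})"] conjI ballI)
    show "\<Union> (range (\<lambda>n::nat. {- real n .. real n})) = space lebesgue"
    proof -
      have "x \<in> \<Union> (range (\<lambda>n::nat. {- real n .. real n}))" for x :: real
      proof -
        obtain n :: nat where "\<bar>x\<bar> \<le> real n" using real_arch_simple by blast
        then have "x \<in> {- real n .. real n}" by auto
        then show ?thesis by blast
      qed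
      then show ?thesis by auto
    qed
    fix a assume "a \<in> range (\<lambda>n::nat. {- real n .. real n})"
    then obtain n :: nat where "a = {- real n .. real n}" by auto
    then show "emeasure lebesgue a \<noteq> \<infinity>" by simp
  qed auto
qed

interpretation leb_pair: pair_sigma_finite "lebesgue :: real measure" "lebesgue :: real measure"
  by (simp add: pair_sigma_finite_def sigma_finite_lebesgue)

lemma id_borel_lebesgue: "(\<lambda>x::real. x) \<in> borel_measurable lebesgue"
  by (rule measurable_completion) simp

lemma lint_interval:
  fixes g :: "real \<Rightarrow> real"
  assumes g: "g \<in> borel_measurable lebesgue" and M: "\<And>x. \<bar>g x\<bar> \<le> M"
  shows "(\<integral>x. indicator {u..v} x * g x \<partial>lebesgue) = integral {u..v} g"
proof -
  have "integrable lebesgue (\<lambda>x. indicator {u..v} x *\<^sub>R g x)"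
    by (rule integrableI_bounded_set_indicator[where B=M]) (use g M in \<open>auto simp: emeasure_lborel_Icc_eq\<close>)
  then have "set_integrable lebesgue {u..v} g" by (simp add: set_integrable_def)
  from set_lebesgue_integral_eq_integral(2)[OF this] show ?thesis
    by (simp add: set_lebesgue_integral_def)
qed

lemma lint_restrict:
  fixes g :: "real \<Rightarrow> real"
  assumes g: "g \<in> borel_measurable (lebesgue_on {u..v})" and M: "\<And>x. x \<in> {u..v} \<Longrightarrow> \<bar>g x\<bar> \<le> M"
  shows "(\<integral>x. (if x \<in> {u..v} then g x else 0) \<partial>lebesgue) = integral {u..v} g"
proof -
  have hm: "(\<lambda>x. if x \<in> {u..v} then g x else 0) \<in> borel_measurable lebesgue"
    by (rule iffD2[OF borel_measurable_if]) (simp_all add: g)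
  have "integrable lebesgue (\<lambda>x. if x \<in> {u..v} then g x else 0)"
    by (rule integrableI_bounded_set[where A="{u..v}" and B=M]) (use hm M in \<open>auto simp: emeasure_lborel_Icc_eq\<close>)
  from has_integral_integral_lebesgue[OF this] have
    "integral UNIV (\<lambda>x. if x \<in> {u..v} then g x else 0) = (\<integral>x. (if x \<in> {u..v} then g x else 0) \<partial>lebesgue)"
    by (rule integral_unique)
  then show ?thesis by (metis Henstock_Kurzweil_Integration.integral_restrict_UNIV)
qed

lemma meas_restrict_sub:
  fixes g :: "real \<Rightarrow> real"
  assumes "g \<in> borel_measurable (lebesgue_on {0..T})" "{u..v} \<subseteq> {0..T}"
  shows "g \<in> borel_measurable (lebesgue_on {u..v})"
proof -
  have "(\<lambda>x. if x \<in> {0..T} then g x else 0) \<in> borel_measurable lebesgue"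
    by (rule iffD2[OF borel_measurable_if]) (simp_all add: assms)
  then have "(\<lambda>x. if x \<in> {0..T} then g x else 0) \<in> borel_measurable (lebesgue_on {u..v})"
    by (rule measurable_restrict_space1)
  then show ?thesis
    by (rule measurable_cong[THEN iffD1, rotated]) (use assms(2) in \<open>auto simp: space_restrict_space\<close>)
qed

lemma ibp:
  fixes a b :: "real \<Rightarrow> real"
  assumes am: "a \<in> borel_measurable (lebesgue_on {0..T})" and bm: "b \<in> borel_measurable (lebesgue_on {0..T})"
    and ab: "\<And>s. s \<in> {0..T} \<Longrightarrow> \<bar>a s\<bar> \<le> Ma" and bb: "\<And>s. s \<in> {0..T} \<Longrightarrow> \<bar>b s\<bar> \<le> Mb"
  shows "integral {0..T} (\<lambda>s. a s * integral {0..s} b) = integral {0..T} (\<lambda>r. b r * integral {r..T} a)"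
proof -
  define A0 where "A0 s = (if s \<in> {0..T} then a s else 0)" for s
  define B0 where "B0 s = (if s \<in> {0..T} then b s else 0)" for s
  have A0m[measurable]: "A0 \<in> borel_measurable lebesgue" unfolding A0_def by (rule iffD2[OF borel_measurable_if]) (simp_all add: am)
  have B0m[measurable]: "B0 \<in> borel_measurable lebesgue" unfolding B0_def by (rule iffD2[OF borel_measurable_if]) (simp_all add: bm)
  have A0b: "\<bar>A0 s\<bar> \<le> \<bar>Ma\<bar>" for s using ab[of s] by (auto simp: A0_def)
  have B0b: "\<bar>B0 s\<bar> \<le> \<bar>Mb\<bar>" for s using bb[of s] by (auto simp: B0_def)
  have ai: "a integrable_on {0..T}"
    by (rule measurable_bounded_by_integrable_imp_integrable_real[OF am, of "\<lambda>_. Ma"]) (use ab in auto)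
  have bi: "b integrable_on {0..T}"
    by (rule measurable_bounded_by_integrable_imp_integrable_real[OF bm, of "\<lambda>_. Mb"]) (use bb in auto)
  define F where "F s r = A0 s * ((if 0 \<le> r \<and> r \<le> s then 1 else 0) * B0 r)" for s r :: real
  have fstm[measurable]: "(\<lambda>p. fst p) \<in> borel_measurable (lebesgue \<Otimes>\<^sub>M lebesgue :: (real\<times>real) measure)"
    using measurable_compose[OF measurable_fst id_borel_lebesgue] by blast
  have sndm[measurable]: "(\<lambda>p. snd p) \<in> borel_measurable (lebesgue \<Otimes>\<^sub>M lebesgue :: (real\<times>real) measure)"
    using measurable_compose[OF measurable_snd id_borel_lebesgue] by blast
  have A0f[measurable]: "(\<lambda>p. A0 (fst p)) \<in> borel_measurable (lebesgue \<Otimes>\<^sub>M lebesgue :: (real\<times>real) measure)"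
    by (rule measurable_compose[OF measurable_fst A0m])
  have B0f[measurable]: "(\<lambda>p. B0 (snd p)) \<in> borel_measurable (lebesgue \<Otimes>\<^sub>M lebesgue :: (real\<times>real) measure)"
    by (rule measurable_compose[OF measurable_snd B0m])
  have Fm: "(\<lambda>p. F (fst p) (snd p)) \<in> borel_measurable (lebesgue \<Otimes>\<^sub>M lebesgue :: (real\<times>real) measure)"
    unfolding F_def by measurable
  have Fint: "integrable (lebesgue \<Otimes>\<^sub>M lebesgue) (case_prod F)"
  proof (rule integrableI_bounded_set[where A="{0..T} \<times> {0..T}" and B="\<bar>Ma\<bar> * \<bar>Mb\<bar>"])
    show "{0..T} \<times> {0..T} \<in> sets (lebesgue \<Otimes>\<^sub>M lebesgue)" by simp
    show "case_prod F \<in> borel_measurable (lebesgue \<Otimes>\<^sub>M lebesgue)"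
      using Fm by (simp add: case_prod_beta')
    show "emeasure (lebesgue \<Otimes>\<^sub>M lebesgue) ({0..T} \<times> {0..T::real}) < \<infinity>"
      by (simp add: sigma_finite_measure.emeasure_pair_measure_Times[OF sigma_finite_lebesgue] emeasure_lborel_Icc_eq ennreal_mult_less_top)
    show "AE x in lebesgue \<Otimes>\<^sub>M lebesgue. x \<in> {0..T} \<times> {0..T} \<longrightarrow> norm (case_prod F x) \<le> \<bar>Ma\<bar> * \<bar>Mb\<bar>"
    proof -
      have Fb: "\<bar>F s r\<bar> \<le> \<bar>Ma\<bar> * \<bar>Mb\<bar>" for s r
      proof -
        have "\<bar>F s r\<bar> \<le> \<bar>A0 s\<bar> * \<bar>B0 r\<bar>" by (simp add: F_def abs_mult)
        also have "\<dots> \<le> \<bar>Ma\<bar> * \<bar>Mb\<bar>" by (intro mult_mono A0b B0b) auto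
        finally show ?thesis .
      qed
      show ?thesis by (rule AE_I2) (use Fb in \<open>auto simp: case_prod_beta'\<close>)
    qed
    show "AE x in lebesgue \<Otimes>\<^sub>M lebesgue. x \<notin> {0..T} \<times> {0..T} \<longrightarrow> case_prod F x = 0"
      by (rule AE_I2) (auto simp: F_def A0_def B0_def split: if_splits)
  qed
  have fub: "(\<integral>r. (\<integral>s. F s r \<partial>lebesgue) \<partial>lebesgue) = (\<integral>s. (\<integral>r. F s r \<partial>lebesgue) \<partial>lebesgue)"
    by (rule leb_pair.Fubini_integral[OF Fint])
  have IB: "(\<integral>r. F s r \<partial>lebesgue) = (if s \<in> {0..T} then a s * integral {0..s} b else 0)" for s
  proof (cases "s \<in> {0..T}")
    case True
    have "(\<integral>r. F s r \<partial>lebesgue) = A0 s * (\<integral>r. (if r \<in> {0..s} then b r else 0) \<partial>lebesgue)"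
      unfolding F_def integral_mult_right_zero[symmetric]
      by (rule Bochner_Integration.integral_cong) (use True in \<open>auto simp: B0_def\<close>)
    also have "(\<integral>r. (if r \<in> {0..s} then b r else 0) \<partial>lebesgue) = integral {0..s} b"
      by (rule lint_restrict[where M=Mb]) (use True in \<open>auto intro: meas_restrict_sub[OF bm] bb\<close>)
    finally show ?thesis using True by (simp add: A0_def)
  next
    case False
    then show ?thesis by (auto simp: F_def A0_def)
  qed
  have IA: "(\<integral>s. F s r \<partial>lebesgue) = (if r \<in> {0..T} then b r * integral {r..T} a else 0)" for r
  proof (cases "r \<in> {0..T}")
    case True
    have "(\<integral>s. F s r \<partial>lebesgue) = B0 r * (\<integral>s. (if s \<in> {r..T} then a s else 0) \<partial>lebesgue)"
      unfolding F_def integral_mult_right_zero[symmetric]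
      by (rule Bochner_Integration.integral_cong) (use True in \<open>auto simp: A0_def B0_def\<close>)
    also have "(\<integral>s. (if s \<in> {r..T} then a s else 0) \<partial>lebesgue) = integral {r..T} a"
      by (rule lint_restrict[where M=Ma]) (use True in \<open>auto intro: meas_restrict_sub[OF am] ab\<close>)
    finally show ?thesis using True by (simp add: B0_def)
  next
    case False
    then show ?thesis by (auto simp: F_def B0_def)
  qed
  have cB: "continuous_on {0..T} (\<lambda>s. integral {0..s} b)" by (rule indefinite_integral_continuous_1[OF bi])
  have cA: "continuous_on {0..T} (\<lambda>r. integral {r..T} a)" by (rule indefinite_integral_continuous_1'[OF ai])
  obtain CB where CB0: "\<forall>s\<in>{0..T}. \<bar>integral {0..s} b\<bar> \<le> CB"
    using compact_imp_bounded[OF compact_continuous_image[OF cB compact_Icc]] unfolding bounded_iff by auto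
  then have CB: "\<And>s. s \<in> {0..T} \<Longrightarrow> \<bar>integral {0..s} b\<bar> \<le> CB" by blast
  obtain CA where CA0: "\<forall>s\<in>{0..T}. \<bar>integral {s..T} a\<bar> \<le> CA"
    using compact_imp_bounded[OF compact_continuous_image[OF cA compact_Icc]] unfolding bounded_iff by auto
  then have CA: "\<And>s. s \<in> {0..T} \<Longrightarrow> \<bar>integral {s..T} a\<bar> \<le> CA" by blast
  have R: "(\<integral>s. (if s \<in> {0..T} then a s * integral {0..s} b else 0) \<partial>lebesgue) = integral {0..T} (\<lambda>s. a s * integral {0..s} b)"
  proof (rule lint_restrict[where M="Ma * CB"])
    show "(\<lambda>s. a s * integral {0..s} b) \<in> borel_measurable (lebesgue_on {0..T})"
      using am continuous_imp_measurable_on_sets_lebesgue[OF cB] by measurable auto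
    fix s assume s: "s \<in> {0..T}"
    have "\<bar>a s * integral {0..s} b\<bar> = \<bar>a s\<bar> * \<bar>integral {0..s} b\<bar>" by (simp add: abs_mult)
    also have "\<dots> \<le> Ma * CB" using ab[OF s] CB[OF s] by (intro mult_mono) auto
    finally show "\<bar>a s * integral {0..s} b\<bar> \<le> Ma * CB" .
  qed
  have L: "(\<integral>r. (if r \<in> {0..T} then b r * integral {r..T} a else 0) \<partial>lebesgue) = integral {0..T} (\<lambda>r. b r * integral {r..T} a)"
  proof (rule lint_restrict[where M="Mb * CA"])
    show "(\<lambda>r. b r * integral {r..T} a) \<in> borel_measurable (lebesgue_on {0..T})"
      using bm continuous_imp_measurable_on_sets_lebesgue[OF cA] by measurable auto
    fix s assume s: "s \<in> {0..T}"
    have "\<bar>b s * integral {s..T} a\<bar> = \<bar>b s\<bar> * \<bar>integral {s..T} a\<bar>" by (simp add: abs_mult)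
    also have "\<dots> \<le> Mb * CA" using bb[OF s] CA[OF s] by (intro mult_mono) auto
    finally show "\<bar>b s * integral {s..T} a\<bar> \<le> Mb * CA" .
  qed
  show ?thesis using fub unfolding IA IB R L by simp
qed

definition Qrem :: "real \<Rightarrow> real \<Rightarrow> real \<Rightarrow> real \<Rightarrow> real \<Rightarrow> real" where
  "Qrem K f m z1 z2 = z1*z2 - (m*z1^2 + 2*f*z1*z2 + z1^2*z2 + f*z2^2 + 2*m*z1*z2 + z1*z2^2)/K"

lemma key_identity:
  fixes \<beta> \<delta> K e1 e2 \<epsilon> h1 h2 f m f' m' l1 l2 :: real
  assumes K: "K \<noteq> 0"
  shows "adj1 \<beta> \<delta> K e1 f m l1 l2 * (f' - f) + l1 * (rhs_f \<beta> \<delta> K (e1 + \<epsilon>*h1) f' m' - rhs_f \<beta> \<delta> K e1 f m)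
       + (adj2 \<beta> \<delta> K e2 f m l1 l2 * (m' - m) + l2 * (rhs_m \<beta> \<delta> K (e2 + \<epsilon>*h2) f' m' - rhs_m \<beta> \<delta> K e2 f m))
       = (f' - f) + (m' - m) + \<epsilon> * (- l1 * h1 * f - l2 * h2 * m)
         + l1 * (\<beta>/2 * Qrem K f m (f' - f) (m' - m) - \<epsilon> * h1 * (f' - f))
         + l2 * (\<beta>/2 * Qrem K f m (f' - f) (m' - m) - \<epsilon> * h2 * (m' - m))"
  using K unfolding adj1_def adj2_def rhs_f_def rhs_m_def Lfac_def Qrem_def
  by (simp add: field_simps power2_eq_square)

definition MB :: "real \<Rightarrow> (real \<Rightarrow> real) \<Rightarrow> bool" where
  "MB T f \<longleftrightarrow> f \<in> borel_measurable (lebesgue_on {0..T}) \<and> (\<exists>M. \<forall>s\<in>{0..T}. \<bar>f s\<bar> \<le> M)"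

lemma MB_const: "MB T (\<lambda>s. c)"
  unfolding MB_def by auto

lemma MB_cont: "continuous_on {0..T} f \<Longrightarrow> MB T f"
  unfolding MB_def
proof
  assume c: "continuous_on {0..T} f"
  show "f \<in> borel_measurable (lebesgue_on {0..T})"
    by (rule continuous_imp_measurable_on_sets_lebesgue[OF c]) simp
  have "bounded (f ` {0..T})" by (intro compact_imp_bounded compact_continuous_image c) simp
  then obtain M where "\<forall>x\<in>f ` {0..T}. norm x \<le> M" unfolding bounded_iff by blast
  then show "\<exists>M. \<forall>s\<in>{0..T}. \<bar>f s\<bar> \<le> M" by auto
qed

lemma MB_add: "MB T f \<Longrightarrow> MB T g \<Longrightarrow> MB T (\<lambda>s. f s + g s)"
  unfolding MB_def
proof (elim conjE exE, intro conjI)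
  fix M1 M2 assume f: "f \<in> borel_measurable (lebesgue_on {0..T})" and g: "g \<in> borel_measurable (lebesgue_on {0..T})"
    and b1: "\<forall>s\<in>{0..T}. \<bar>f s\<bar> \<le> M1" and b2: "\<forall>s\<in>{0..T}. \<bar>g s\<bar> \<le> M2"
  show "(\<lambda>s. f s + g s) \<in> borel_measurable (lebesgue_on {0..T})" using f g by measurable
  show "\<exists>M. \<forall>s\<in>{0..T}. \<bar>f s + g s\<bar> \<le> M"
    by (rule exI[of _ "M1 + M2"]) (use b1 b2 in \<open>auto intro: order_trans[OF abs_triangle_ineq] add_mono\<close>)
qed

lemma MB_uminus: "MB T f \<Longrightarrow> MB T (\<lambda>s. - f s)"
  unfolding MB_def by (auto intro: borel_measurable_uminus)

lemma MB_diff: "MB T f \<Longrightarrow> MB T g \<Longrightarrow> MB T (\<lambda>s. f s - g s)"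
  using MB_add[of T f "\<lambda>s. - g s"] MB_uminus[of T g] by simp

lemma MB_mult: "MB T f \<Longrightarrow> MB T g \<Longrightarrow> MB T (\<lambda>s. f s * g s)"
  unfolding MB_def
proof (elim conjE exE, intro conjI)
  fix M1 M2 assume f: "f \<in> borel_measurable (lebesgue_on {0..T})" and g: "g \<in> borel_measurable (lebesgue_on {0..T})"
    and b1: "\<forall>s\<in>{0..T}. \<bar>f s\<bar> \<le> M1" and b2: "\<forall>s\<in>{0..T}. \<bar>g s\<bar> \<le> M2"
  show "(\<lambda>s. f s * g s) \<in> borel_measurable (lebesgue_on {0..T})" using f g by measurable
  show "\<exists>M. \<forall>s\<in>{0..T}. \<bar>f s * g s\<bar> \<le> M"
  proof (rule exI[of _ "M1 * M2"], intro ballI)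
    fix s assume s: "s \<in> {0..T}"
    have "\<bar>f s * g s\<bar> = \<bar>f s\<bar> * \<bar>g s\<bar>" by (simp add: abs_mult)
    also have "\<dots> \<le> M1 * M2" using b1 b2 s by (intro mult_mono) (auto intro: order_trans[OF abs_ge_zero])
    finally show "\<bar>f s * g s\<bar> \<le> M1 * M2" .
  qed
qed

lemma MB_divc: "MB T f \<Longrightarrow> MB T (\<lambda>s. f s / c)"
  using MB_mult[of T f "\<lambda>s. 1 / c"] MB_const[of T "1/c"] by simp

lemma MB_pow2: "MB T f \<Longrightarrow> MB T (\<lambda>s. (f s)\<^sup>2)"
  using MB_mult[of T f f] by (simp add: power2_eq_square)

lemma MB_int: "MB T f \<Longrightarrow> f integrable_on {0..T}"
  unfolding MB_def
proof (elim conjE exE)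
  fix M assume f: "f \<in> borel_measurable (lebesgue_on {0..T})" and b: "\<forall>s\<in>{0..T}. \<bar>f s\<bar> \<le> M"
  show "f integrable_on {0..T}"
    by (rule measurable_bounded_by_integrable_imp_integrable_real[OF f, of "\<lambda>_. M"]) (use b in auto)
qed

lemma MB_meas: "MB T f \<Longrightarrow> f \<in> borel_measurable (lebesgue_on {0..T})"
  unfolding MB_def by auto

lemma MB_bdd: "MB T f \<Longrightarrow> \<exists>M. \<forall>s\<in>{0..T}. \<bar>f s\<bar> \<le> M"
  unfolding MB_def by auto

lemma MB_cong: "MB T f \<Longrightarrow> (\<And>s. s \<in> {0..T} \<Longrightarrow> f s = g s) \<Longrightarrow> MB T g"
  unfolding MB_def
proof (elim conjE exE, intro conjI)
  fix M assume f: "f \<in> borel_measurable (lebesgue_on {0..T})" and b: "\<forall>s\<in>{0..T}. \<bar>f s\<bar> \<le> M"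
    and e: "\<And>s. s \<in> {0..T} \<Longrightarrow> f s = g s"
  show "g \<in> borel_measurable (lebesgue_on {0..T})"
    using f by (rule measurable_cong[THEN iffD1, rotated]) (simp add: e space_restrict_space)
  show "\<exists>M. \<forall>s\<in>{0..T}. \<bar>g s\<bar> \<le> M" using b e by auto
qed

lemmas MB_intros = MB_add MB_diff MB_mult MB_divc MB_uminus MB_pow2 MB_const

lemma has_integral_pair:
  fixes f g :: "real \<Rightarrow> real"
  assumes "(f has_integral a) S" "(g has_integral b) S"
  shows "((\<lambda>x. (f x, g x)) has_integral (a, b)) S"
proof -
  have l1: "bounded_linear (\<lambda>x::real. (x, 0::real))"
    by (rule bounded_linear_Pair[OF bounded_linear_ident bounded_linear_zero])
  have l2: "bounded_linear (\<lambda>x::real. (0::real, x))"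
    by (rule bounded_linear_Pair[OF bounded_linear_zero bounded_linear_ident])
  have 1: "((\<lambda>x. (f x, 0::real)) has_integral (a, 0)) S"
    using has_integral_linear[OF assms(1) l1] by (simp add: o_def)
  have 2: "((\<lambda>x. (0::real, g x)) has_integral (0, b)) S"
    using has_integral_linear[OF assms(2) l2] by (simp add: o_def)
  show ?thesis using has_integral_add[OF 1 2] by simp
qed

lemma integrable_pair:
  fixes f g :: "real \<Rightarrow> real"
  assumes "f integrable_on S" "g integrable_on S"
  shows "(\<lambda>x. (f x, g x)) integrable_on S"
  using has_integral_pair assms unfolding integrable_on_def by blast

lemma has_integral_fst:
  fixes F :: "real \<Rightarrow> real \<times> real"
  assumes "(F has_integral I) S"
  shows "((\<lambda>x. fst (F x)) has_integral fst I) S"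
  using has_integral_linear[OF assms bounded_linear_fst] by (simp add: o_def)

lemma has_integral_snd:
  fixes F :: "real \<Rightarrow> real \<times> real"
  assumes "(F has_integral I) S"
  shows "((\<lambda>x. snd (F x)) has_integral snd I) S"
  using has_integral_linear[OF assms bounded_linear_snd] by (simp add: o_def)

definition clip :: "real \<Rightarrow> real \<Rightarrow> real" where "clip R v = max (- R) (min R v)"

lemma clip_lip: "\<bar>clip R v - clip R w\<bar> \<le> \<bar>v - w\<bar>"
  unfolding clip_def by (auto simp: max_def min_def)

lemma clip_bdd: "0 \<le> R \<Longrightarrow> \<bar>clip R v\<bar> \<le> R"
  unfolding clip_def by (auto simp: max_def min_def)

lemma clip_id: "\<bar>v\<bar> \<le> R \<Longrightarrow> clip R v = v"
  unfolding clip_def by (auto simp: max_def min_def)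

lemma continuous_clip: "continuous_on S f \<Longrightarrow> continuous_on S (\<lambda>s. clip R (f s))"
  unfolding clip_def by (intro continuous_intros)

lemma proj_ineq:
  fixes w a :: real
  assumes "0 \<le> a" "a \<le> 1"
  shows "(min 1 (max 0 w) - a)\<^sup>2 \<le> (w - a) * (min 1 (max 0 w) - a)"
proof (cases "w \<le> 0")
  case True
  then have "min 1 (max 0 w) = 0" by simp
  moreover have "a * a \<le> (a - w) * a" using True assms by (intro mult_right_mono) auto
  ultimately show ?thesis by (simp add: power2_eq_square algebra_simps)
next
  case False
  show ?thesis
  proof (cases "w \<le> 1")
    case True
    with False have "min 1 (max 0 w) = w" by simp
    then show ?thesis by (simp add: power2_eq_square)
  next
    case False2: False
    then have "min 1 (max 0 w) = 1" by simp
    moreover have "(1 - a) * (1 - a) \<le> (w - a) * (1 - a)" using False2 assms by (intro mult_right_mono) auto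
    ultimately show ?thesis by (simp add: power2_eq_square)
  qed
qed

lemma small_le_zero:
  fixes I C e0 :: real
  assumes e0: "0 < e0" and C: "0 \<le> C" and h: "\<And>e. 0 < e \<Longrightarrow> e \<le> e0 \<Longrightarrow> I \<le> C * e"
  shows "I \<le> 0"
proof (rule ccontr)
  assume "\<not> I \<le> 0"
  then have I: "0 < I" by simp
  define e where "e = min e0 (I / (2 * (C + 1)))"
  have e: "0 < e" "e \<le> e0" using e0 I C by (auto simp: e_def)
  have "C * e \<le> C * (I / (2 * (C + 1)))" using C by (intro mult_left_mono) (auto simp: e_def)
  also have "\<dots> = I * (C / (2 * (C + 1)))" by simp
  also have "\<dots> < I * 1"
  proof (rule mult_strict_left_mono)
    show "C / (2 * (C + 1)) < 1" using C by (simp add: field_simps)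
  qed (use I in auto)
  finally show False using h[OF e] by simp
qed

lemma abs_mult_le: "\<bar>x\<bar> \<le> X \<Longrightarrow> \<bar>y\<bar> \<le> Y \<Longrightarrow> \<bar>x * y\<bar> \<le> X * (Y::real)"
  by (simp add: abs_mult) (rule mult_mono, auto intro: order_trans[OF abs_ge_zero])

lemma rhs_f_lip:
  fixes \<beta> \<delta> K e a b a' b' R :: real
  assumes \<beta>: "0 < \<beta>" and \<delta>: "0 < \<delta>" and K: "0 < K" and e: "0 \<le> e" "e \<le> 1"
    and a: "\<bar>a\<bar> \<le> R" and b: "\<bar>b\<bar> \<le> R" and a': "\<bar>a'\<bar> \<le> R" and b': "\<bar>b'\<bar> \<le> R"
  shows "\<bar>rhs_f \<beta> \<delta> K e a b - rhs_f \<beta> \<delta> K e a' b'\<bar> \<le> (\<beta>/2*(R + 4*R^2/K) + \<delta> + 1) * (\<bar>a - a'\<bar> + \<bar>b - b'\<bar>)"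
    and "\<bar>rhs_m \<beta> \<delta> K e a b - rhs_m \<beta> \<delta> K e a' b'\<bar> \<le> (\<beta>/2*(R + 4*R^2/K) + \<delta> + 1) * (\<bar>a - a'\<bar> + \<bar>b - b'\<bar>)"
proof -
  have R: "0 \<le> R" using a by auto
  define da where "da = \<bar>a - a'\<bar>"
  define db where "db = \<bar>b - b'\<bar>"
  have D1: "\<bar>a*b - a'*b'\<bar> \<le> R * (da + db)"
  proof -
    have "a*b - a'*b' = a * (b - b') + b' * (a - a')" by (simp add: algebra_simps)
    also have "\<bar>\<dots>\<bar> \<le> \<bar>a * (b - b')\<bar> + \<bar>b' * (a - a')\<bar>" by (rule abs_triangle_ineq)
    also have "\<dots> \<le> R * db + R * da"
      by (intro add_mono abs_mult_le a b'; simp add: da_def db_def)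
    finally show ?thesis by (simp add: algebra_simps)
  qed
  have D2: "\<bar>a^2*b - a'^2*b'\<bar> \<le> 2*R^2 * (da + db)"
  proof -
    have "a^2*b - a'^2*b' = ((a + a') * b) * (a - a') + a'^2 * (b - b')" by (simp add: algebra_simps power2_eq_square)
    also have "\<bar>\<dots>\<bar> \<le> \<bar>((a + a') * b) * (a - a')\<bar> + \<bar>a'^2 * (b - b')\<bar>" by (rule abs_triangle_ineq)
    also have "\<dots> \<le> (2*R*R) * da + (R*R) * db"
    proof (rule add_mono; rule abs_mult_le)
      show "\<bar>(a + a') * b\<bar> \<le> 2 * R * R"
        using abs_mult_le[of "a + a'" "2*R" b R] a a' b by (auto intro: order_trans[OF abs_triangle_ineq])
      show "\<bar>a'^2\<bar> \<le> R * R" using abs_mult_le[OF a' a'] by (simp add: power2_eq_square)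
    qed (auto simp: da_def db_def)
    also have "\<dots> \<le> 2*R^2 * (da + db)" using R by (simp add: power2_eq_square algebra_simps da_def db_def)
    finally show ?thesis .
  qed
  have D3: "\<bar>a*b^2 - a'*b'^2\<bar> \<le> 2*R^2 * (da + db)"
  proof -
    have "a*b^2 - a'*b'^2 = b^2 * (a - a') + (a' * (b + b')) * (b - b')" by (simp add: algebra_simps power2_eq_square)
    also have "\<bar>\<dots>\<bar> \<le> \<bar>b^2 * (a - a')\<bar> + \<bar>(a' * (b + b')) * (b - b')\<bar>" by (rule abs_triangle_ineq)
    also have "\<dots> \<le> (R*R) * da + (2*R*R) * db"
    proof (rule add_mono; rule abs_mult_le)
      show "\<bar>a' * (b + b')\<bar> \<le> 2 * R * R"
        using abs_mult_le[of a' R "b + b'" "2*R"] a' b b' by (auto intro: order_trans[OF abs_triangle_ineq] simp: mult_ac)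
      show "\<bar>b^2\<bar> \<le> R * R" using abs_mult_le[OF b b] by (simp add: power2_eq_square)
    qed (auto simp: da_def db_def)
    also have "\<dots> \<le> 2*R^2 * (da + db)" using R by (simp add: power2_eq_square algebra_simps da_def db_def)
    finally show ?thesis .
  qed
  have P: "\<bar>\<beta>/2 * (a*b - a'*b') - \<beta>/(2*K) * ((a^2*b - a'^2*b') + (a*b^2 - a'*b'^2))\<bar>
      \<le> \<beta>/2*(R + 4*R^2/K) * (da + db)"
  proof -
    have "\<bar>\<beta>/2 * (a*b - a'*b') - \<beta>/(2*K) * ((a^2*b - a'^2*b') + (a*b^2 - a'*b'^2))\<bar>
        \<le> \<bar>\<beta>/2 * (a*b - a'*b')\<bar> + \<bar>\<beta>/(2*K) * ((a^2*b - a'^2*b') + (a*b^2 - a'*b'^2))\<bar>"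
      by (rule abs_triangle_ineq4)
    also have "\<dots> \<le> \<beta>/2 * (R * (da + db)) + \<beta>/(2*K) * (4*R^2 * (da + db))"
    proof (rule add_mono)
      show "\<bar>\<beta>/2 * (a*b - a'*b')\<bar> \<le> \<beta>/2 * (R * (da + db))"
        using D1 \<beta> by (simp add: abs_mult)
      have S: "\<bar>(a^2*b - a'^2*b') + (a*b^2 - a'*b'^2)\<bar> \<le> 4*R^2 * (da + db)"
        using D2 D3 abs_triangle_ineq[of "a^2*b - a'^2*b'" "a*b^2 - a'*b'^2"] by linarith
      have "\<bar>\<beta>/(2*K) * ((a^2*b - a'^2*b') + (a*b^2 - a'*b'^2))\<bar> = \<beta>/(2*K) * \<bar>(a^2*b - a'^2*b') + (a*b^2 - a'*b'^2)\<bar>"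
        using \<beta> K by (simp add: abs_mult)
      also have "\<dots> \<le> \<beta>/(2*K) * (4*R^2 * (da + db))" using S \<beta> K by (intro mult_left_mono) auto
      finally show "\<bar>\<beta>/(2*K) * ((a^2*b - a'^2*b') + (a*b^2 - a'*b'^2))\<bar> \<le> \<beta>/(2*K) * (4*R^2 * (da + db))" .
    qed
    also have "\<dots> = \<beta>/2*(R + 4*R^2/K) * (da + db)" using K by (simp add: field_simps)
    finally show ?thesis .
  qed
  have eq1: "rhs_f \<beta> \<delta> K e a b - rhs_f \<beta> \<delta> K e a' b' =
     (\<beta>/2 * (a*b - a'*b') - \<beta>/(2*K) * ((a^2*b - a'^2*b') + (a*b^2 - a'*b'^2))) - (\<delta> + e) * (a - a')"
    using K unfolding rhs_f_def Lfac_def by (simp add: field_simps power2_eq_square)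
  have eq2: "rhs_m \<beta> \<delta> K e a b - rhs_m \<beta> \<delta> K e a' b' =
     (\<beta>/2 * (a*b - a'*b') - \<beta>/(2*K) * ((a^2*b - a'^2*b') + (a*b^2 - a'*b'^2))) - (\<delta> + e) * (b - b')"
    using K unfolding rhs_m_def Lfac_def by (simp add: field_simps power2_eq_square)
  have de1: "\<bar>(\<delta> + e) * (a - a')\<bar> \<le> (\<delta> + 1) * (da + db)"
    using \<delta> e by (auto simp: abs_mult da_def db_def intro!: mult_mono)
  have de2: "\<bar>(\<delta> + e) * (b - b')\<bar> \<le> (\<delta> + 1) * (da + db)"
    using \<delta> e by (auto simp: abs_mult da_def db_def intro!: mult_mono)
  show "\<bar>rhs_f \<beta> \<delta> K e a b - rhs_f \<beta> \<delta> K e a' b'\<bar> \<le> (\<beta>/2*(R + 4*R^2/K) + \<delta> + 1) * (\<bar>a - a'\<bar> + \<bar>b - b'\<bar>)"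
  proof -
    have "\<bar>rhs_f \<beta> \<delta> K e a b - rhs_f \<beta> \<delta> K e a' b'\<bar> \<le> \<beta>/2*(R + 4*R^2/K) * (da + db) + (\<delta> + 1) * (da + db)"
      unfolding eq1 by (rule order_trans[OF abs_triangle_ineq4 add_mono[OF P de1]])
    also have "\<dots> = (\<beta>/2*(R + 4*R^2/K) + \<delta> + 1) * (\<bar>a - a'\<bar> + \<bar>b - b'\<bar>)" by (simp add: da_def db_def algebra_simps)
    finally show ?thesis .
  qed
  show "\<bar>rhs_m \<beta> \<delta> K e a b - rhs_m \<beta> \<delta> K e a' b'\<bar> \<le> (\<beta>/2*(R + 4*R^2/K) + \<delta> + 1) * (\<bar>a - a'\<bar> + \<bar>b - b'\<bar>)"
  proof -
    have "\<bar>rhs_m \<beta> \<delta> K e a b - rhs_m \<beta> \<delta> K e a' b'\<bar> \<le> \<beta>/2*(R + 4*R^2/K) * (da + db) + (\<delta> + 1) * (da + db)"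
      unfolding eq2 by (rule order_trans[OF abs_triangle_ineq4 add_mono[OF P de2]])
    also have "\<dots> = (\<beta>/2*(R + 4*R^2/K) + \<delta> + 1) * (\<bar>a - a'\<bar> + \<bar>b - b'\<bar>)" by (simp add: da_def db_def algebra_simps)
    finally show ?thesis .
  qed
qed

lemma Qrem_bound:
  fixes K f m z1 z2 B Z C :: real
  assumes K: "0 < K" and f: "\<bar>f\<bar> \<le> B" and m: "\<bar>m\<bar> \<le> B" and z1: "\<bar>z1\<bar> \<le> Z" and z2: "\<bar>z2\<bar> \<le> Z"
    and ZC: "Z \<le> C"
  shows "\<bar>Qrem K f m z1 z2\<bar> \<le> (1 + (6*B + 2*C)/K) * Z^2"
proof -
  have Z: "0 \<le> Z" using z1 by auto
  have t1: "\<bar>z1*z2\<bar> \<le> Z*Z" by (rule abs_mult_le[OF z1 z2])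
  have t2: "\<bar>m*z1^2\<bar> \<le> B*(Z*Z)" unfolding power2_eq_square by (intro abs_mult_le m z1 z2 abs_mult_le[OF z1 z1])
  have t3: "\<bar>2*f*z1*z2\<bar> \<le> 2*B*(Z*Z)"
    using abs_mult_le[OF abs_mult_le[OF f z1] z2] by (simp add: abs_mult mult_ac)
  have t4: "\<bar>z1^2*z2\<bar> \<le> C*(Z*Z)"
  proof -
    have "\<bar>z1^2*z2\<bar> \<le> (Z*Z)*Z" unfolding power2_eq_square by (intro abs_mult_le z2 abs_mult_le[OF z1 z1])
    also have "\<dots> \<le> (Z*Z)*C" using ZC Z by (intro mult_left_mono) auto
    finally show ?thesis by (simp add: mult_ac)
  qed
  have t5: "\<bar>f*z2^2\<bar> \<le> B*(Z*Z)" unfolding power2_eq_square by (intro abs_mult_le f abs_mult_le[OF z2 z2])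
  have t6: "\<bar>2*m*z1*z2\<bar> \<le> 2*B*(Z*Z)"
    using abs_mult_le[OF abs_mult_le[OF m z1] z2] by (simp add: abs_mult mult_ac)
  have t7: "\<bar>z1*z2^2\<bar> \<le> C*(Z*Z)"
  proof -
    have "\<bar>z1*z2^2\<bar> \<le> Z*(Z*Z)" unfolding power2_eq_square by (intro abs_mult_le z1 abs_mult_le[OF z2 z2])
    also have "\<dots> \<le> C*(Z*Z)" using ZC Z by (intro mult_right_mono) auto
    finally show ?thesis .
  qed
  have N: "\<bar>m*z1^2 + 2*f*z1*z2 + z1^2*z2 + f*z2^2 + 2*m*z1*z2 + z1*z2^2\<bar> \<le> (6*B + 2*C)*(Z*Z)"
  proof -
    have "\<bar>m*z1^2 + 2*f*z1*z2 + z1^2*z2 + f*z2^2 + 2*m*z1*z2 + z1*z2^2\<bar>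
      \<le> \<bar>m*z1^2\<bar> + \<bar>2*f*z1*z2\<bar> + \<bar>z1^2*z2\<bar> + \<bar>f*z2^2\<bar> + \<bar>2*m*z1*z2\<bar> + \<bar>z1*z2^2\<bar>"
      by linarith
    also have "\<dots> \<le> B*(Z*Z) + 2*B*(Z*Z) + C*(Z*Z) + B*(Z*Z) + 2*B*(Z*Z) + C*(Z*Z)"
      using t2 t3 t4 t5 t6 t7 by linarith
    finally show ?thesis by (simp add: algebra_simps)
  qed
  have "\<bar>Qrem K f m z1 z2\<bar> \<le> \<bar>z1*z2\<bar> + \<bar>m*z1^2 + 2*f*z1*z2 + z1^2*z2 + f*z2^2 + 2*m*z1*z2 + z1*z2^2\<bar> / K"
    unfolding Qrem_def using K by (simp add: abs_triangle_ineq4[THEN order_trans] abs_divide)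
  also have "\<dots> \<le> Z*Z + (6*B + 2*C)*(Z*Z) / K"
    using t1 N K by (intro add_mono divide_right_mono) auto
  also have "\<dots> = (1 + (6*B + 2*C)/K) * Z^2" using K by (simp add: field_simps power2_eq_square)
  finally show ?thesis .
qed

lemma rem_total:
  fixes K f m z1 z2 B C1 Lb l1 l2 h1 h2 \<epsilon> \<beta> :: real
  assumes K: "0 < K" and \<beta>: "0 < \<beta>" and f: "\<bar>f\<bar> \<le> B" and m: "\<bar>m\<bar> \<le> B"
    and z1: "\<bar>z1\<bar> \<le> C1 * \<epsilon>" and z2: "\<bar>z2\<bar> \<le> C1 * \<epsilon>" and C1: "0 \<le> C1"
    and e: "0 \<le> \<epsilon>" "\<epsilon> \<le> 1" and l1: "\<bar>l1\<bar> \<le> Lb" and l2: "\<bar>l2\<bar> \<le> Lb"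
    and h1: "\<bar>h1\<bar> \<le> 1" and h2: "\<bar>h2\<bar> \<le> 1"
  shows "\<bar>l1 * (\<beta>/2 * Qrem K f m z1 z2 - \<epsilon>*h1*z1) + l2 * (\<beta>/2 * Qrem K f m z1 z2 - \<epsilon>*h2*z2)\<bar>
         \<le> 2 * Lb * (\<beta>/2 * (1 + (6*B + 2*C1)/K) * C1^2 + C1) * \<epsilon>^2"
proof -
  have ZC: "C1 * \<epsilon> \<le> C1" using C1 e by (simp add: mult_left_le)
  have Q: "\<bar>Qrem K f m z1 z2\<bar> \<le> (1 + (6*B + 2*C1)/K) * (C1*\<epsilon>)^2"
    by (rule Qrem_bound[OF K f m z1 z2 ZC])
  define W where "W = (\<beta>/2 * (1 + (6*B + 2*C1)/K) * C1^2 + C1) * \<epsilon>^2"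
  have R: "\<bar>\<beta>/2 * Qrem K f m z1 z2 - \<epsilon>*h*z\<bar> \<le> W" if h: "\<bar>h\<bar> \<le> 1" and z: "\<bar>z\<bar> \<le> C1 * \<epsilon>" for h z
  proof -
    have a: "\<bar>\<beta>/2 * Qrem K f m z1 z2\<bar> \<le> \<beta>/2 * ((1 + (6*B + 2*C1)/K) * (C1*\<epsilon>)^2)"
      using Q \<beta> by (simp add: abs_mult)
    have b: "\<bar>\<epsilon>*h*z\<bar> \<le> \<epsilon> * 1 * (C1 * \<epsilon>)"
      using abs_mult_le[OF abs_mult_le[of \<epsilon> \<epsilon> h 1] z] e h by auto
    have "\<bar>\<beta>/2 * Qrem K f m z1 z2 - \<epsilon>*h*z\<bar> \<le> \<bar>\<beta>/2 * Qrem K f m z1 z2\<bar> + \<bar>\<epsilon>*h*z\<bar>" by (rule abs_triangle_ineq4)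
    also have "\<dots> \<le> \<beta>/2 * ((1 + (6*B + 2*C1)/K) * (C1*\<epsilon>)^2) + \<epsilon> * 1 * (C1 * \<epsilon>)" using a b by (rule add_mono)
    also have "\<dots> = W" by (simp add: W_def power2_eq_square algebra_simps)
    finally show ?thesis .
  qed
  have "\<bar>l1 * (\<beta>/2 * Qrem K f m z1 z2 - \<epsilon>*h1*z1) + l2 * (\<beta>/2 * Qrem K f m z1 z2 - \<epsilon>*h2*z2)\<bar>
     \<le> \<bar>l1 * (\<beta>/2 * Qrem K f m z1 z2 - \<epsilon>*h1*z1)\<bar> + \<bar>l2 * (\<beta>/2 * Qrem K f m z1 z2 - \<epsilon>*h2*z2)\<bar>"
    by (rule abs_triangle_ineq)
  also have "\<dots> \<le> Lb * W + Lb * W"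
    by (intro add_mono abs_mult_le l1 l2 R h1 h2 z1 z2)
  also have "\<dots> = 2 * Lb * (\<beta>/2 * (1 + (6*B + 2*C1)/K) * C1^2 + C1) * \<epsilon>^2" by (simp add: W_def)
  finally show ?thesis .
qed

lemma adm_meas: "admissible T \<eta> \<Longrightarrow> \<eta> \<in> borel_measurable (lebesgue_on {0..T})"
  unfolding admissible_def set_borel_measurable_def
  by (subst borel_measurable_restrict_space_iff) auto

lemma adm_bdd: "admissible T \<eta> \<Longrightarrow> t \<in> {0..T} \<Longrightarrow> 0 \<le> \<eta> t \<and> \<eta> t \<le> 1"
  unfolding admissible_def by auto

lemma adm_intro: "\<eta> \<in> borel_measurable (lebesgue_on {0..T}) \<Longrightarrow> (\<And>t. t \<in> {0..T} \<Longrightarrow> 0 \<le> \<eta> t \<and> \<eta> t \<le> 1) \<Longrightarrow> admissible T \<eta>"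
  unfolding admissible_def set_borel_measurable_def
  by (subst (asm) borel_measurable_restrict_space_iff) auto

lemma MB_adm: "admissible T \<eta> \<Longrightarrow> MB T \<eta>"
  unfolding MB_def using adm_meas adm_bdd by (metis abs_of_nonneg)

lemma abs_fst_le: "\<bar>fst v\<bar> \<le> norm (v :: real \<times> real)"
  using norm_fst_le[of "fst v" "snd v"] by simp

lemma abs_snd_le: "\<bar>snd v\<bar> \<le> norm (v :: real \<times> real)"
  using norm_snd_le[of "snd v" "fst v"] by simp

lemma norm_pair_abs: "norm (v :: real \<times> real) \<le> \<bar>fst v\<bar> + \<bar>snd v\<bar>"
  using norm_Pair_le[of "fst v" "snd v"] by simp

lemma ae_zero:
  fixes q :: "real \<Rightarrow> real"
  assumes q: "MB T q" and nn: "\<And>t. t \<in> {0..T} \<Longrightarrow> 0 \<le> q t" and I: "integral {0..T} q \<le> 0"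
  shows "AE t in lebesgue. t \<in> {0..T} \<longrightarrow> q t = 0"
proof -
  obtain M where M: "\<forall>s\<in>{0..T}. \<bar>q s\<bar> \<le> M" using MB_bdd[OF q] by blast
  define Q where "Q x = (if x \<in> {0..T} then q x else 0)" for x
  have hm: "Q \<in> borel_measurable lebesgue" unfolding Q_def
    by (rule iffD2[OF borel_measurable_if]) (simp_all add: MB_meas[OF q])
  have Qi: "integrable lebesgue Q"
    by (rule integrableI_bounded_set[where A="{0..T}" and B=M]) (use hm M in \<open>auto simp: emeasure_lborel_Icc_eq Q_def\<close>)
  have "(\<integral>x. Q x \<partial>lebesgue) = integral {0..T} q"
    unfolding Q_def by (rule lint_restrict[where M=M]) (use MB_meas[OF q] M in auto)
  moreover have nnQ: "AE x in lebesgue. 0 \<le> Q x" by (rule AE_I2) (simp add: Q_def nn)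
  moreover have "0 \<le> (\<integral>x. Q x \<partial>lebesgue)" by (rule integral_nonneg_AE[OF nnQ])
  ultimately have Qeq: "(\<integral>x. Q x \<partial>lebesgue) = 0" using I by simp
  from integral_nonneg_eq_0_iff_AE[OF Qi nnQ] Qeq have "AE x in lebesgue. Q x = 0" by simp
  then show ?thesis by (rule AE_mp) (auto simp: Q_def)
qed

lemma conv01:
  fixes a b e :: real
  assumes "0 \<le> a" "a \<le> 1" "0 \<le> b" "b \<le> 1" "0 \<le> e" "e \<le> 1"
  shows "0 \<le> a + e * (b - a) \<and> a + e * (b - a) \<le> 1"
proof -
  have eq: "a + e * (b - a) = (1 - e) * a + e * b" by (simp add: algebra_simps)
  have "0 \<le> (1 - e) * a + e * b" using assms by simp
  moreover have "(1 - e) * a + e * b \<le> (1 - e) * 1 + e * 1"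
    using assms by (intro add_mono mult_left_mono) auto
  ultimately show ?thesis unfolding eq by simp
qed

lemma pointwise_lb:
  fixes \<beta> \<delta> K e1 e2 \<epsilon> h1 h2 f m f' m' l1 l2 B C1 Lb Sg Dj :: real
  assumes K: "0 < K" and \<beta>: "0 < \<beta>" and e: "0 < \<epsilon>" "\<epsilon> \<le> 1"
    and e1: "0 \<le> e1" "e1 \<le> 1" and e2: "0 \<le> e2" "e2 \<le> 1"
    and h1: "h1 = min 1 (max 0 (- f * l1)) - e1" and h2: "h2 = min 1 (max 0 (- m * l2)) - e2"
    and f: "\<bar>f\<bar> \<le> B" and m: "\<bar>m\<bar> \<le> B"
    and z1: "\<bar>f' - f\<bar> \<le> C1 * \<epsilon>" and z2: "\<bar>m' - m\<bar> \<le> C1 * \<epsilon>" and C1: "0 \<le> C1"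
    and l1: "\<bar>l1\<bar> \<le> Lb" and l2: "\<bar>l2\<bar> \<le> Lb" and h1b: "\<bar>h1\<bar> \<le> 1" and h2b: "\<bar>h2\<bar> \<le> 1"
    and Dj: "Dj = -(f' + m') - ((e1 + \<epsilon>*h1)\<^sup>2 + (e2 + \<epsilon>*h2)\<^sup>2)/2 - (-(f + m) - ((e1)\<^sup>2 + (e2)\<^sup>2)/2)"
    and Sg: "Sg = (adj1 \<beta> \<delta> K e1 f m l1 l2 * (f' - f) + l1 * (rhs_f \<beta> \<delta> K (e1 + \<epsilon>*h1) f' m' - rhs_f \<beta> \<delta> K e1 f m))
       + (adj2 \<beta> \<delta> K e2 f m l1 l2 * (m' - m) + l2 * (rhs_m \<beta> \<delta> K (e2 + \<epsilon>*h2) f' m' - rhs_m \<beta> \<delta> K e2 f m))"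
  shows "\<epsilon>/2 * (h1\<^sup>2 + h2\<^sup>2) - 2 * Lb * (\<beta>/2 * (1 + (6*B + 2*C1)/K) * C1^2 + C1) * \<epsilon>^2 \<le> Dj + Sg"
proof -
  define Rm where "Rm = l1 * (\<beta>/2 * Qrem K f m (f' - f) (m' - m) - \<epsilon> * h1 * (f' - f))
         + l2 * (\<beta>/2 * Qrem K f m (f' - f) (m' - m) - \<epsilon> * h2 * (m' - m))"
  have Sg2: "Sg = (f' - f) + (m' - m) + \<epsilon> * (- l1 * h1 * f - l2 * h2 * m) + Rm"
    unfolding Sg Rm_def using key_identity[of K \<beta> \<delta> e1 f m l1 l2 f' \<epsilon> h1 m' e2 h2] K by simp
  have sum: "Dj + Sg = \<epsilon> * ((- f * l1 - e1) * h1 + (- m * l2 - e2) * h2) - \<epsilon>\<^sup>2 * (h1\<^sup>2 + h2\<^sup>2) / 2 + Rm"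
    unfolding Dj Sg2 by (simp add: power2_eq_square algebra_simps divide_simps)
  have p1: "h1\<^sup>2 \<le> (- f * l1 - e1) * h1" unfolding h1 by (rule proj_ineq[OF e1])
  have p2: "h2\<^sup>2 \<le> (- m * l2 - e2) * h2" unfolding h2 by (rule proj_ineq[OF e2])
  have Rb: "\<bar>Rm\<bar> \<le> 2 * Lb * (\<beta>/2 * (1 + (6*B + 2*C1)/K) * C1^2 + C1) * \<epsilon>^2"
    unfolding Rm_def by (rule rem_total[OF K \<beta> f m z1 z2 C1 _ e(2) l1 l2 h1b h2b]) (use e in auto)
  have "\<epsilon> * (h1\<^sup>2 + h2\<^sup>2) \<le> \<epsilon> * ((- f * l1 - e1) * h1 + (- m * l2 - e2) * h2)"
    using p1 p2 e by (intro mult_left_mono) auto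
  moreover have "\<epsilon>\<^sup>2 * (h1\<^sup>2 + h2\<^sup>2) / 2 \<le> \<epsilon> * (h1\<^sup>2 + h2\<^sup>2) / 2"
  proof -
    have "\<epsilon>\<^sup>2 \<le> \<epsilon>" using e by (simp add: power2_eq_square mult_left_le)
    then show ?thesis by (intro divide_right_mono mult_right_mono) auto
  qed
  ultimately show ?thesis unfolding sum using Rb by linarith
qed

theorem mainTheorem9:
  fixes \<beta> \<delta> K T f0 m0 :: real
    and \<eta>1s \<eta>2s fs ms :: "real \<Rightarrow> real"
  assumes "0 < \<beta>" "\<beta> < 1" "0 < \<delta>" "\<delta> < 1" "0 < K" "0 < T"
    and "admissible T \<eta>1s" "admissible T \<eta>2s"
    and "is_state \<beta> \<delta> K T f0 m0 \<eta>1s \<eta>2s fs ms"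
    and optimal: "\<forall>\<eta>1 \<eta>2 f m. admissible T \<eta>1 \<and> admissible T \<eta>2 \<and>
                    is_state \<beta> \<delta> K T f0 m0 \<eta>1 \<eta>2 f m \<longrightarrow>
                    J4 T \<eta>1 \<eta>2 f m \<le> J4 T \<eta>1s \<eta>2s fs ms"
  shows "\<exists>l1 l2 :: real \<Rightarrow> real.
           continuous_on {0..T} l1 \<and> continuous_on {0..T} l2 \<and>
           l1 T = 0 \<and> l2 T = 0 \<and>
           (\<forall>t\<in>{0..T}. ((\<lambda>s. adj1 \<beta> \<delta> K (\<eta>1s s) (fs s) (ms s) (l1 s) (l2 s))
                          has_integral (l1 T - l1 t)) {t..T}) \<and>
           (\<forall>t\<in>{0..T}. ((\<lambda>s. adj2 \<beta> \<delta> K (\<eta>2s s) (fs s) (ms s) (l1 s) (l2 s))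
                          has_integral (l2 T - l2 t)) {t..T}) \<and>
           (AE t in lebesgue. t \<in> {0..T} \<longrightarrow>
              \<eta>1s t = min 1 (max 0 (- fs t * l1 t)) \<and>
              \<eta>2s t = min 1 (max 0 (- ms t * l2 t)))"
proof -
  have \<beta>: "0 < \<beta>" and \<delta>: "0 < \<delta>" and K: "0 < K" and T: "0 < T" using assms by auto
  have adm1: "admissible T \<eta>1s" and adm2: "admissible T \<eta>2s" using assms by auto
  have fc: "continuous_on {0..T} fs" and mc: "continuous_on {0..T} ms"
    and fsi: "\<And>t. t \<in> {0..T} \<Longrightarrow> ((\<lambda>s. rhs_f \<beta> \<delta> K (\<eta>1s s) (fs s) (ms s)) has_integral (fs t - f0)) {0..t}"
    and msi: "\<And>t. t \<in> {0..T} \<Longrightarrow> ((\<lambda>s. rhs_m \<beta> \<delta> K (\<eta>2s s) (fs s) (ms s)) has_integral (ms t - m0)) {0..t}"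
    using assms(9) unfolding is_state_def by auto
  have e1b: "\<And>t. t \<in> {0..T} \<Longrightarrow> 0 \<le> \<eta>1s t \<and> \<eta>1s t \<le> 1" using adm_bdd[OF adm1] by blast
  have e2b: "\<And>t. t \<in> {0..T} \<Longrightarrow> 0 \<le> \<eta>2s t \<and> \<eta>2s t \<le> 1" using adm_bdd[OF adm2] by blast
  have MBf: "MB T fs" by (rule MB_cont[OF fc])
  have MBm: "MB T ms" by (rule MB_cont[OF mc])
  have MBe1: "MB T \<eta>1s" by (rule MB_adm[OF adm1])
  have MBe2: "MB T \<eta>2s" by (rule MB_adm[OF adm2])
  obtain Mf where Mf: "\<forall>s\<in>{0..T}. \<bar>fs s\<bar> \<le> Mf" using MB_bdd[OF MBf] by blast
  obtain Mm where Mm: "\<forall>s\<in>{0..T}. \<bar>ms s\<bar> \<le> Mm" using MB_bdd[OF MBm] by blast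
  define B where "B = max 1 (max Mf Mm)"
  have B: "1 \<le> B" by (simp add: B_def)
  have MfB: "Mf \<le> B" and MmB: "Mm \<le> B" by (simp_all add: B_def)
  have fB: "\<And>s. s \<in> {0..T} \<Longrightarrow> \<bar>fs s\<bar> \<le> B" using Mf MfB by (meson order_trans)
  have mB: "\<And>s. s \<in> {0..T} \<Longrightarrow> \<bar>ms s\<bar> \<le> B" using Mm MmB by (meson order_trans)
  define R where "R = B + 1"

  define c11 where "c11 s = ms s * \<beta> / 2 * Lfac K (fs s) (ms s) - fs s * ms s * \<beta> / (2 * K) - \<delta> - \<eta>1s s" for s
  define c21 where "c21 s = ms s * \<beta> / 2 * Lfac K (fs s) (ms s) - fs s * ms s * \<beta> / (2 * K)" for s
  define c12 where "c12 s = fs s * \<beta> / 2 * Lfac K (fs s) (ms s) - fs s * ms s * \<beta> / (2 * K)" for s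
  define c22 where "c22 s = fs s * \<beta> / 2 * Lfac K (fs s) (ms s) - fs s * ms s * \<beta> / (2 * K) - \<delta> - \<eta>2s s" for s
  have adj1_eq: "adj1 \<beta> \<delta> K (\<eta>1s s) (fs s) (ms s) x y = 1 - x * c11 s - y * c21 s" for s x y
    by (simp add: adj1_def c11_def c21_def)
  have adj2_eq: "adj2 \<beta> \<delta> K (\<eta>2s s) (fs s) (ms s) x y = 1 - x * c12 s - y * c22 s" for s x y
    by (simp add: adj2_def c12_def c22_def)
  have MBc11: "MB T c11" unfolding c11_def Lfac_def by (intro MB_intros MBf MBm MBe1)
  have MBc21: "MB T c21" unfolding c21_def Lfac_def by (intro MB_intros MBf MBm)
  have MBc12: "MB T c12" unfolding c12_def Lfac_def by (intro MB_intros MBf MBm)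
  have MBc22: "MB T c22" unfolding c22_def Lfac_def by (intro MB_intros MBf MBm MBe2)
  obtain C11 where C11: "\<forall>s\<in>{0..T}. \<bar>c11 s\<bar> \<le> C11" using MB_bdd[OF MBc11] by blast
  obtain C21 where C21: "\<forall>s\<in>{0..T}. \<bar>c21 s\<bar> \<le> C21" using MB_bdd[OF MBc21] by blast
  obtain C12 where C12: "\<forall>s\<in>{0..T}. \<bar>c12 s\<bar> \<le> C12" using MB_bdd[OF MBc12] by blast
  obtain C22 where C22: "\<forall>s\<in>{0..T}. \<bar>c22 s\<bar> \<le> C22" using MB_bdd[OF MBc22] by blast
  define LA where "LA = C11 + C21 + C12 + C22"
  have LA: "0 \<le> LA" using C11 C21 C12 C22 T unfolding LA_def
    by (metis (no_types, lifting) abs_ge_zero add_nonneg_nonneg atLeastAtMost_iff less_eq_real_def order_trans)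
  define A where "A s p = (adj1 \<beta> \<delta> K (\<eta>1s s) (fs s) (ms s) (fst p) (snd p), adj2 \<beta> \<delta> K (\<eta>2s s) (fs s) (ms s) (fst p) (snd p))" for s p
  have lipA: "norm (A t p - A t q) \<le> LA * norm (p - q)" if t: "t \<in> {0..T}" for t p q
  proof -
    define N where "N = norm (p - q)"
    have d1: "\<bar>fst p - fst q\<bar> \<le> N" using abs_fst_le[of "p - q"] by (simp add: N_def)
    have d2: "\<bar>snd p - snd q\<bar> \<le> N" using abs_snd_le[of "p - q"] by (simp add: N_def)
    have "fst (A t p - A t q) = (fst q - fst p) * c11 t + (snd q - snd p) * c21 t"
      by (simp add: A_def adj1_eq algebra_simps)
    also have "\<bar>\<dots>\<bar> \<le> N * C11 + N * C21"
      using d1 d2 C11 C21 t by (intro order_trans[OF abs_triangle_ineq] add_mono abs_mult_le) (auto simp: abs_minus_commute)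
    finally have 1: "\<bar>fst (A t p - A t q)\<bar> \<le> N * C11 + N * C21" .
    have "snd (A t p - A t q) = (fst q - fst p) * c12 t + (snd q - snd p) * c22 t"
      by (simp add: A_def adj2_eq algebra_simps)
    also have "\<bar>\<dots>\<bar> \<le> N * C12 + N * C22"
      using d1 d2 C12 C22 t by (intro order_trans[OF abs_triangle_ineq] add_mono abs_mult_le) (auto simp: abs_minus_commute)
    finally have 2: "\<bar>snd (A t p - A t q)\<bar> \<le> N * C12 + N * C22" .
    have "norm (A t p - A t q) \<le> \<bar>fst (A t p - A t q)\<bar> + \<bar>snd (A t p - A t q)\<bar>" by (rule norm_pair_abs)
    also have "\<dots> \<le> LA * N" using 1 2 by (simp add: LA_def algebra_simps)
    finally show ?thesis by (simp add: N_def)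
  qed
  have integA: "(\<lambda>s. A s (p s)) integrable_on {0..T}" if p: "continuous_on {0..T} p" for p
  proof -
    have p1: "MB T (\<lambda>s. fst (p s))" by (rule MB_cont) (intro continuous_intros p)
    have p2: "MB T (\<lambda>s. snd (p s))" by (rule MB_cont) (intro continuous_intros p)
    have "MB T (\<lambda>s. 1 - fst (p s) * c11 s - snd (p s) * c21 s)" by (intro MB_intros p1 p2 MBc11 MBc21)
    moreover have "MB T (\<lambda>s. 1 - fst (p s) * c12 s - snd (p s) * c22 s)" by (intro MB_intros p1 p2 MBc12 MBc22)
    ultimately show ?thesis unfolding A_def adj1_eq adj2_eq by (intro integrable_pair MB_int)
  qed
  obtain l where lc: "continuous_on {0..T} l" and lT: "l T = 0"
    and li: "\<And>t. t \<in> {0..T} \<Longrightarrow> ((\<lambda>s. A s (l s)) has_integral (l T - l t)) {t..T}"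
    using ode_backward[OF lipA LA less_imp_le[OF T] integA] by blast
  define l1 where "l1 s = fst (l s)" for s
  define l2 where "l2 s = snd (l s)" for s
  have l1c: "continuous_on {0..T} l1" unfolding l1_def by (intro continuous_intros lc)
  have l2c: "continuous_on {0..T} l2" unfolding l2_def by (intro continuous_intros lc)
  have l1T: "l1 T = 0" and l2T: "l2 T = 0" using lT by (auto simp: l1_def l2_def)
  have l1i: "((\<lambda>s. adj1 \<beta> \<delta> K (\<eta>1s s) (fs s) (ms s) (l1 s) (l2 s)) has_integral (l1 T - l1 t)) {t..T}"
    if t: "t \<in> {0..T}" for t
    using has_integral_fst[OF li[OF t]] by (simp add: A_def l1_def l2_def)
  have l2i: "((\<lambda>s. adj2 \<beta> \<delta> K (\<eta>2s s) (fs s) (ms s) (l1 s) (l2 s)) has_integral (l2 T - l2 t)) {t..T}"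
    if t: "t \<in> {0..T}" for t
    using has_integral_snd[OF li[OF t]] by (simp add: A_def l1_def l2_def)

  define \<eta>1 where "\<eta>1 s = min 1 (max 0 (- fs s * l1 s))" for s
  define \<eta>2 where "\<eta>2 s = min 1 (max 0 (- ms s * l2 s))" for s
  define h1 where "h1 s = \<eta>1 s - \<eta>1s s" for s
  define h2 where "h2 s = \<eta>2 s - \<eta>2s s" for s
  define q where "q s = (h1 s)\<^sup>2 + (h2 s)\<^sup>2" for s
  have \<eta>1c: "continuous_on {0..T} \<eta>1" unfolding \<eta>1_def by (intro continuous_intros fc l1c)
  have \<eta>2c: "continuous_on {0..T} \<eta>2" unfolding \<eta>2_def by (intro continuous_intros mc l2c)
  have MBq: "MB T q" unfolding q_def h1_def h2_def by (intro MB_intros MB_cont[OF \<eta>1c] MB_cont[OF \<eta>2c] MBe1 MBe2)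
  have qnn: "\<And>t. 0 \<le> q t" by (simp add: q_def)

  have claim: "\<exists>e0>0. \<exists>Cq\<ge>0. \<forall>\<epsilon>. 0 < \<epsilon> \<longrightarrow> \<epsilon> \<le> e0 \<longrightarrow> integral {0..T} q \<le> Cq * \<epsilon>"
  proof -
    have R0: "0 \<le> R" and BR: "B \<le> R" using B by (auto simp: R_def)
    define Lf where "Lf = \<beta>/2*(R + 4*R^2/K) + \<delta> + 1"
    have Lf0: "0 \<le> Lf" unfolding Lf_def using \<beta> \<delta> K R0 by (intro add_nonneg_nonneg mult_nonneg_nonneg) auto
    define Lc where "Lc = 4 * Lf"
    have Lc0: "0 \<le> Lc" using Lf0 by (simp add: Lc_def)
    define C1 where "C1 = 4 * R * T * exp ((2*Lc+1)*T)"
    have C10: "0 \<le> C1" unfolding C1_def using R0 T by simp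
    obtain Lb1 where Lb1: "\<forall>s\<in>{0..T}. \<bar>l1 s\<bar> \<le> Lb1" using MB_bdd[OF MB_cont[OF l1c]] by blast
    obtain Lb2 where Lb2: "\<forall>s\<in>{0..T}. \<bar>l2 s\<bar> \<le> Lb2" using MB_bdd[OF MB_cont[OF l2c]] by blast
    define Lb where "Lb = max 0 (max Lb1 Lb2)"
    have Lb0: "0 \<le> Lb" by (simp add: Lb_def)
    have l1b: "\<And>s. s \<in> {0..T} \<Longrightarrow> \<bar>l1 s\<bar> \<le> Lb" using Lb1 unfolding Lb_def by (meson order_trans max.cobounded1 max.cobounded2)
    have l2b: "\<And>s. s \<in> {0..T} \<Longrightarrow> \<bar>l2 s\<bar> \<le> Lb" using Lb2 unfolding Lb_def by (meson order_trans max.cobounded1 max.cobounded2)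
    define C3 where "C3 = 2 * Lb * (\<beta>/2 * (1 + (6*B + 2*C1)/K) * C1^2 + C1)"
    have C30: "0 \<le> C3" unfolding C3_def using Lb0 \<beta> K B C10
      by (intro mult_nonneg_nonneg add_nonneg_nonneg) auto
    define e0 where "e0 = 1 / (2*C1 + 2)"
    have e0: "0 < e0" using C10 by (simp add: e0_def)
    have h1b: "\<bar>h1 s\<bar> \<le> 1" if s: "s \<in> {0..T}" for s
    proof -
      have "0 \<le> \<eta>1 s \<and> \<eta>1 s \<le> 1" by (simp add: \<eta>1_def)
      then show ?thesis using e1b[OF s] unfolding h1_def abs_le_iff by linarith
    qed
    have h2b: "\<bar>h2 s\<bar> \<le> 1" if s: "s \<in> {0..T}" for s
    proof -
      have "0 \<le> \<eta>2 s \<and> \<eta>2 s \<le> 1" by (simp add: \<eta>2_def)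
      then show ?thesis using e2b[OF s] unfolding h2_def abs_le_iff by linarith
    qed
    have main: "integral {0..T} q \<le> (2 * C3 * T) * \<epsilon>" if ep: "0 < \<epsilon>" "\<epsilon> \<le> e0" for \<epsilon>
    proof -
      have "e0 \<le> 1/2" using C10 by (simp add: e0_def field_simps)
      then have e01: "\<epsilon> \<le> 1" using ep by linarith
      have C1e: "C1 * \<epsilon> \<le> 1/2"
      proof -
        have "C1 * \<epsilon> \<le> C1 * e0" using ep C10 by (intro mult_left_mono) auto
        also have "\<dots> \<le> 1/2" using C10 by (simp add: e0_def field_simps)
        finally show ?thesis .
      qed
      define \<eta>e1 where "\<eta>e1 s = \<eta>1s s + \<epsilon> * h1 s" for s
      define \<eta>e2 where "\<eta>e2 s = \<eta>2s s + \<epsilon> * h2 s" for s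
      have ee1b: "0 \<le> \<eta>e1 t \<and> \<eta>e1 t \<le> 1" if t: "t \<in> {0..T}" for t
        unfolding \<eta>e1_def h1_def by (rule conv01) (use e1b[OF t] ep e01 in \<open>auto simp: \<eta>1_def\<close>)
      have ee2b: "0 \<le> \<eta>e2 t \<and> \<eta>e2 t \<le> 1" if t: "t \<in> {0..T}" for t
        unfolding \<eta>e2_def h2_def by (rule conv01) (use e2b[OF t] ep e01 in \<open>auto simp: \<eta>2_def\<close>)
      have MBee1: "MB T \<eta>e1" unfolding \<eta>e1_def h1_def by (intro MB_intros MBe1 MB_cont[OF \<eta>1c])
      have MBee2: "MB T \<eta>e2" unfolding \<eta>e2_def h2_def by (intro MB_intros MBe2 MB_cont[OF \<eta>2c])
      have adme1: "admissible T \<eta>e1" by (rule adm_intro[OF MB_meas[OF MBee1] ee1b])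
      have adme2: "admissible T \<eta>e2" by (rule adm_intro[OF MB_meas[OF MBee2] ee2b])
      define G where "G s p = (rhs_f \<beta> \<delta> K (\<eta>e1 s) (clip R (fst p)) (clip R (snd p)), rhs_m \<beta> \<delta> K (\<eta>e2 s) (clip R (fst p)) (clip R (snd p)))" for s p
      define G0 where "G0 s p = (rhs_f \<beta> \<delta> K (\<eta>1s s) (clip R (fst p)) (clip R (snd p)), rhs_m \<beta> \<delta> K (\<eta>2s s) (clip R (fst p)) (clip R (snd p)))" for s p
      have lipG: "norm (G t p - G t p') \<le> Lc * norm (p - p')" if t: "t \<in> {0..T}" for t p p'
      proof -
        define N where "N = norm (p - p')"
        have d1: "\<bar>clip R (fst p) - clip R (fst p')\<bar> \<le> N"
          using clip_lip[of R "fst p" "fst p'"] abs_fst_le[of "p - p'"] by (simp add: N_def)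
        have d2: "\<bar>clip R (snd p) - clip R (snd p')\<bar> \<le> N"
          using clip_lip[of R "snd p" "snd p'"] abs_snd_le[of "p - p'"] by (simp add: N_def)
        have cb: "\<bar>clip R v\<bar> \<le> R" for v by (rule clip_bdd[OF R0])
        have 1: "\<bar>fst (G t p - G t p')\<bar> \<le> Lf * (N + N)"
        proof -
          have "\<bar>fst (G t p - G t p')\<bar> \<le> Lf * (\<bar>clip R (fst p) - clip R (fst p')\<bar> + \<bar>clip R (snd p) - clip R (snd p')\<bar>)"
            unfolding G_def Lf_def using rhs_f_lip(1)[OF \<beta> \<delta> K _ _ cb cb cb cb] ee1b[OF t] by simp
          also have "\<dots> \<le> Lf * (N + N)" using d1 d2 Lf0 by (intro mult_left_mono) auto
          finally show ?thesis .
        qed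
        have 2: "\<bar>snd (G t p - G t p')\<bar> \<le> Lf * (N + N)"
        proof -
          have "\<bar>snd (G t p - G t p')\<bar> \<le> Lf * (\<bar>clip R (fst p) - clip R (fst p')\<bar> + \<bar>clip R (snd p) - clip R (snd p')\<bar>)"
            unfolding G_def Lf_def using rhs_f_lip(2)[OF \<beta> \<delta> K _ _ cb cb cb cb] ee2b[OF t] by simp
          also have "\<dots> \<le> Lf * (N + N)" using d1 d2 Lf0 by (intro mult_left_mono) auto
          finally show ?thesis .
        qed
        have "norm (G t p - G t p') \<le> \<bar>fst (G t p - G t p')\<bar> + \<bar>snd (G t p - G t p')\<bar>" by (rule norm_pair_abs)
        also have "\<dots> \<le> Lc * N" using 1 2 by (simp add: Lc_def algebra_simps)
        finally show ?thesis by (simp add: N_def)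
      qed
      have integG: "(\<lambda>s. G s (p s)) integrable_on {0..T}" if p: "continuous_on {0..T} p" for p
      proof -
        have p1: "MB T (\<lambda>s. clip R (fst (p s)))" by (rule MB_cont) (intro continuous_clip continuous_intros p)
        have p2: "MB T (\<lambda>s. clip R (snd (p s)))" by (rule MB_cont) (intro continuous_clip continuous_intros p)
        have "MB T (\<lambda>s. rhs_f \<beta> \<delta> K (\<eta>e1 s) (clip R (fst (p s))) (clip R (snd (p s))))"
          unfolding rhs_f_def Lfac_def by (intro MB_intros p1 p2 MBee1)
        moreover have "MB T (\<lambda>s. rhs_m \<beta> \<delta> K (\<eta>e2 s) (clip R (fst (p s))) (clip R (snd (p s))))"
          unfolding rhs_m_def Lfac_def by (intro MB_intros p1 p2 MBee2)
        ultimately show ?thesis unfolding G_def by (intro integrable_pair MB_int)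
      qed
      have xsc: "continuous_on {0..T} (\<lambda>s. (fs s, ms s))" by (intro continuous_intros fc mc)
      have xsi: "((\<lambda>s. G0 s (fs s, ms s)) has_integral ((fs t, ms t) - (f0, m0))) {0..t}" if t: "t \<in> {0..T}" for t
      proof -
        have H: "((\<lambda>s. (rhs_f \<beta> \<delta> K (\<eta>1s s) (fs s) (ms s), rhs_m \<beta> \<delta> K (\<eta>2s s) (fs s) (ms s))) has_integral (fs t - f0, ms t - m0)) {0..t}"
          by (rule has_integral_pair[OF fsi[OF t] msi[OF t]])
        have eqf: "(rhs_f \<beta> \<delta> K (\<eta>1s s) (fs s) (ms s), rhs_m \<beta> \<delta> K (\<eta>2s s) (fs s) (ms s)) = G0 s (fs s, ms s)"
          if s: "s \<in> {0..t}" for s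
        proof -
          have sT: "s \<in> {0..T}" using s t by auto
          have "clip R (fs s) = fs s" by (rule clip_id) (use fB[OF sT] BR in auto)
          moreover have "clip R (ms s) = ms s" by (rule clip_id) (use mB[OF sT] BR in auto)
          ultimately show ?thesis by (simp add: G0_def)
        qed
        have "((\<lambda>s. G0 s (fs s, ms s)) has_integral (fs t - f0, ms t - m0)) {0..t}"
          by (rule iffD1[OF has_integral_cong[OF eqf] H])
        then show ?thesis by simp
      qed
      have pert: "norm (G t p - G0 t p) \<le> 2 * \<epsilon> * R" if t: "t \<in> {0..T}" for t p
      proof -
        have cb: "\<bar>clip R v\<bar> \<le> R" for v by (rule clip_bdd[OF R0])
        have "fst (G t p - G0 t p) = - (\<epsilon> * h1 t) * clip R (fst p)"
          by (simp add: G_def G0_def rhs_f_def \<eta>e1_def algebra_simps)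
        then have 1: "\<bar>fst (G t p - G0 t p)\<bar> \<le> (\<epsilon> * 1) * R"
          using abs_mult_le[OF abs_mult_le[of \<epsilon> \<epsilon> "h1 t" 1] cb[of "fst p"]] h1b[OF t] ep by (simp add: abs_mult)
        have "snd (G t p - G0 t p) = - (\<epsilon> * h2 t) * clip R (snd p)"
          by (simp add: G_def G0_def rhs_m_def \<eta>e2_def algebra_simps)
        then have 2: "\<bar>snd (G t p - G0 t p)\<bar> \<le> (\<epsilon> * 1) * R"
          using abs_mult_le[OF abs_mult_le[of \<epsilon> \<epsilon> "h2 t" 1] cb[of "snd p"]] h2b[OF t] ep by (simp add: abs_mult)
        show ?thesis using norm_pair_abs[of "G t p - G0 t p"] 1 2 by simp
      qed
      obtain x where xc: "continuous_on {0..T} x"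
        and xsol: "\<And>t. t \<in> {0..T} \<Longrightarrow> ((\<lambda>s. G s (x s)) has_integral (x t - (f0, m0))) {0..t}"
        and xcl: "\<And>t. t \<in> {0..T} \<Longrightarrow> norm (x t - (fs t, ms t)) \<le> 2 * (2 * \<epsilon> * R) * T * exp ((2*Lc+1) * T)"
        using ode_close[where G=G and G0=G0 and xs="\<lambda>s. (fs s, ms s)" and xi="(f0, m0)" and eps="2 * \<epsilon> * R",
            OF lipG Lc0 less_imp_le[OF T] integG xsc xsi pert] by blast
      define fe where "fe s = fst (x s)" for s
      define me where "me s = snd (x s)" for s
      have fec: "continuous_on {0..T} fe" unfolding fe_def by (intro continuous_intros xc)
      have mec: "continuous_on {0..T} me" unfolding me_def by (intro continuous_intros xc)
      have C1eq: "2 * (2 * \<epsilon> * R) * T * exp ((2*Lc+1) * T) = C1 * \<epsilon>" by (simp add: C1_def)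
      have z1b: "\<bar>fe t - fs t\<bar> \<le> C1 * \<epsilon>" if t: "t \<in> {0..T}" for t
        using abs_fst_le[of "x t - (fs t, ms t)"] xcl[OF t] unfolding C1eq by (simp add: fe_def)
      have z2b: "\<bar>me t - ms t\<bar> \<le> C1 * \<epsilon>" if t: "t \<in> {0..T}" for t
        using abs_snd_le[of "x t - (fs t, ms t)"] xcl[OF t] unfolding C1eq by (simp add: me_def)
      have feR: "clip R (fe t) = fe t" if t: "t \<in> {0..T}" for t
        by (rule clip_id) (use z1b[OF t] C1e fB[OF t] in \<open>auto simp: R_def\<close>)
      have meR: "clip R (me t) = me t" if t: "t \<in> {0..T}" for t
        by (rule clip_id) (use z2b[OF t] C1e mB[OF t] in \<open>auto simp: R_def\<close>)
      have fei: "((\<lambda>s. rhs_f \<beta> \<delta> K (\<eta>e1 s) (fe s) (me s)) has_integral (fe t - f0)) {0..t}" if t: "t \<in> {0..T}" for t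
      proof -
        have H: "((\<lambda>s. fst (G s (x s))) has_integral fst (x t - (f0, m0))) {0..t}" by (rule has_integral_fst[OF xsol[OF t]])
        have eqf: "fst (G s (x s)) = rhs_f \<beta> \<delta> K (\<eta>e1 s) (fe s) (me s)" if s: "s \<in> {0..t}" for s
          using feR[of s] meR[of s] s t by (simp add: G_def fe_def me_def)
        have H2: "((\<lambda>s. rhs_f \<beta> \<delta> K (\<eta>e1 s) (fe s) (me s)) has_integral fst (x t - (f0, m0))) {0..t}"
          by (rule iffD1[OF has_integral_cong[OF eqf] H])
        then show ?thesis by (simp add: fe_def)
      qed
      have mei: "((\<lambda>s. rhs_m \<beta> \<delta> K (\<eta>e2 s) (fe s) (me s)) has_integral (me t - m0)) {0..t}" if t: "t \<in> {0..T}" for t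
      proof -
        have H: "((\<lambda>s. snd (G s (x s))) has_integral snd (x t - (f0, m0))) {0..t}" by (rule has_integral_snd[OF xsol[OF t]])
        have eqf: "snd (G s (x s)) = rhs_m \<beta> \<delta> K (\<eta>e2 s) (fe s) (me s)" if s: "s \<in> {0..t}" for s
          using feR[of s] meR[of s] s t by (simp add: G_def fe_def me_def)
        have H2: "((\<lambda>s. rhs_m \<beta> \<delta> K (\<eta>e2 s) (fe s) (me s)) has_integral snd (x t - (f0, m0))) {0..t}"
          by (rule iffD1[OF has_integral_cong[OF eqf] H])
        then show ?thesis by (simp add: me_def)
      qed
      have state: "is_state \<beta> \<delta> K T f0 m0 \<eta>e1 \<eta>e2 fe me"
        unfolding is_state_def using fec mec fei mei by blast
      have Jle: "J4 T \<eta>e1 \<eta>e2 fe me \<le> J4 T \<eta>1s \<eta>2s fs ms"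
        using optimal adme1 adme2 state by blast
      define a1 where "a1 s = adj1 \<beta> \<delta> K (\<eta>1s s) (fs s) (ms s) (l1 s) (l2 s)" for s
      define a2 where "a2 s = adj2 \<beta> \<delta> K (\<eta>2s s) (fs s) (ms s) (l1 s) (l2 s)" for s
      define zd1 where "zd1 s = rhs_f \<beta> \<delta> K (\<eta>e1 s) (fe s) (me s) - rhs_f \<beta> \<delta> K (\<eta>1s s) (fs s) (ms s)" for s
      define zd2 where "zd2 s = rhs_m \<beta> \<delta> K (\<eta>e2 s) (fe s) (me s) - rhs_m \<beta> \<delta> K (\<eta>2s s) (fs s) (ms s)" for s
      have MBl1: "MB T l1" by (rule MB_cont[OF l1c])
      have MBl2: "MB T l2" by (rule MB_cont[OF l2c])
      have MBfe: "MB T fe" by (rule MB_cont[OF fec])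
      have MBme: "MB T me" by (rule MB_cont[OF mec])
      have MBa1: "MB T a1" unfolding a1_def adj1_eq by (intro MB_intros MBl1 MBl2 MBc11 MBc21)
      have MBa2: "MB T a2" unfolding a2_def adj2_eq by (intro MB_intros MBl1 MBl2 MBc12 MBc22)
      have MBzd1: "MB T zd1" unfolding zd1_def rhs_f_def Lfac_def by (intro MB_intros MBee1 MBe1 MBfe MBme MBf MBm)
      have MBzd2: "MB T zd2" unfolding zd2_def rhs_m_def Lfac_def by (intro MB_intros MBee2 MBe2 MBfe MBme MBf MBm)
      have z1int: "integral {0..t} zd1 = fe t - fs t" if t: "t \<in> {0..T}" for t
      proof -
        have "(zd1 has_integral ((fe t - f0) - (fs t - f0))) {0..t}"
          unfolding zd1_def by (rule has_integral_diff[OF fei[OF t] fsi[OF t]])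
        then show ?thesis by (simp add: integral_unique)
      qed
      have z2int: "integral {0..t} zd2 = me t - ms t" if t: "t \<in> {0..T}" for t
      proof -
        have "(zd2 has_integral ((me t - m0) - (ms t - m0))) {0..t}"
          unfolding zd2_def by (rule has_integral_diff[OF mei[OF t] msi[OF t]])
        then show ?thesis by (simp add: integral_unique)
      qed
      have a1int: "integral {t..T} a1 = - l1 t" if t: "t \<in> {0..T}" for t
        using integral_unique[OF l1i[OF t]] l1T by (simp add: a1_def[abs_def])
      have a2int: "integral {t..T} a2 = - l2 t" if t: "t \<in> {0..T}" for t
        using integral_unique[OF l2i[OF t]] l2T by (simp add: a2_def[abs_def])
      obtain Ma1 where Ma1: "\<forall>s\<in>{0..T}. \<bar>a1 s\<bar> \<le> Ma1" using MB_bdd[OF MBa1] by blast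
      obtain Ma2 where Ma2: "\<forall>s\<in>{0..T}. \<bar>a2 s\<bar> \<le> Ma2" using MB_bdd[OF MBa2] by blast
      obtain Mz1 where Mz1: "\<forall>s\<in>{0..T}. \<bar>zd1 s\<bar> \<le> Mz1" using MB_bdd[OF MBzd1] by blast
      obtain Mz2 where Mz2: "\<forall>s\<in>{0..T}. \<bar>zd2 s\<bar> \<le> Mz2" using MB_bdd[OF MBzd2] by blast
      have ibp1: "integral {0..T} (\<lambda>s. a1 s * integral {0..s} zd1) = integral {0..T} (\<lambda>r. zd1 r * integral {r..T} a1)"
        by (rule ibp[OF MB_meas[OF MBa1] MB_meas[OF MBzd1]]) (use Ma1 Mz1 in auto)
      have ibp2: "integral {0..T} (\<lambda>s. a2 s * integral {0..s} zd2) = integral {0..T} (\<lambda>r. zd2 r * integral {r..T} a2)"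
        by (rule ibp[OF MB_meas[OF MBa2] MB_meas[OF MBzd2]]) (use Ma2 Mz2 in auto)
      have E1: "integral {0..T} (\<lambda>s. a1 s * (fe s - fs s) + l1 s * zd1 s) = 0"
      proof -
        have c1: "integral {0..T} (\<lambda>s. a1 s * (fe s - fs s)) = integral {0..T} (\<lambda>s. a1 s * integral {0..s} zd1)"
          by (rule integral_cong) (simp add: z1int)
        have c2: "integral {0..T} (\<lambda>r. zd1 r * integral {r..T} a1) = integral {0..T} (\<lambda>r. - (l1 r * zd1 r))"
          by (rule integral_cong) (simp add: a1int)
        have i1: "(\<lambda>s. a1 s * (fe s - fs s)) integrable_on {0..T}" by (intro MB_int MB_intros MBa1 MBfe MBf)
        have i2: "(\<lambda>s. l1 s * zd1 s) integrable_on {0..T}" by (intro MB_int MB_intros MBl1 MBzd1)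
        show ?thesis unfolding integral_add[OF i1 i2] c1 ibp1 c2 integral_neg by simp
      qed
      have E2: "integral {0..T} (\<lambda>s. a2 s * (me s - ms s) + l2 s * zd2 s) = 0"
      proof -
        have c1: "integral {0..T} (\<lambda>s. a2 s * (me s - ms s)) = integral {0..T} (\<lambda>s. a2 s * integral {0..s} zd2)"
          by (rule integral_cong) (simp add: z2int)
        have c2: "integral {0..T} (\<lambda>r. zd2 r * integral {r..T} a2) = integral {0..T} (\<lambda>r. - (l2 r * zd2 r))"
          by (rule integral_cong) (simp add: a2int)
        have i1: "(\<lambda>s. a2 s * (me s - ms s)) integrable_on {0..T}" by (intro MB_int MB_intros MBa2 MBme MBm)
        have i2: "(\<lambda>s. l2 s * zd2 s) integrable_on {0..T}" by (intro MB_int MB_intros MBl2 MBzd2)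
        show ?thesis unfolding integral_add[OF i1 i2] c1 ibp2 c2 integral_neg by simp
      qed
      define Sg where "Sg s = (a1 s * (fe s - fs s) + l1 s * zd1 s) + (a2 s * (me s - ms s) + l2 s * zd2 s)" for s
      have MBSg: "MB T Sg" unfolding Sg_def by (intro MB_intros MBa1 MBa2 MBfe MBme MBf MBm MBl1 MBl2 MBzd1 MBzd2)
      have ISg: "integral {0..T} Sg = 0"
      proof -
        have i1: "(\<lambda>s. a1 s * (fe s - fs s) + l1 s * zd1 s) integrable_on {0..T}"
          by (intro MB_int MB_intros MBa1 MBfe MBf MBl1 MBzd1)
        have i2: "(\<lambda>s. a2 s * (me s - ms s) + l2 s * zd2 s) integrable_on {0..T}"
          by (intro MB_int MB_intros MBa2 MBme MBm MBl2 MBzd2)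
        show ?thesis unfolding Sg_def integral_add[OF i1 i2] E1 E2 by simp
      qed
      define je where "je s = - (fe s + me s) - ((\<eta>e1 s)\<^sup>2 + (\<eta>e2 s)\<^sup>2) / 2" for s
      define j0 where "j0 s = - (fs s + ms s) - ((\<eta>1s s)\<^sup>2 + (\<eta>2s s)\<^sup>2) / 2" for s
      have MBje: "MB T je" unfolding je_def by (intro MB_intros MBfe MBme MBee1 MBee2)
      have MBj0: "MB T j0" unfolding j0_def by (intro MB_intros MBf MBm MBe1 MBe2)
      have J4e: "J4 T \<eta>e1 \<eta>e2 fe me = integral {0..T} je" by (simp add: J4_def je_def[abs_def])
      have J40: "J4 T \<eta>1s \<eta>2s fs ms = integral {0..T} j0" by (simp add: J4_def j0_def[abs_def])
      have tot: "integral {0..T} (\<lambda>s. (je s - j0 s) + Sg s) \<le> 0"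
      proof -
        have id: "(\<lambda>s. je s - j0 s) integrable_on {0..T}" by (intro MB_int MB_intros MBje MBj0)
        have "integral {0..T} (\<lambda>s. (je s - j0 s) + Sg s) = integral {0..T} je - integral {0..T} j0 + integral {0..T} Sg"
          unfolding integral_add[OF id MB_int[OF MBSg]] integral_diff[OF MB_int[OF MBje] MB_int[OF MBj0]] ..
        then show ?thesis using Jle ISg unfolding J4e J40 by simp
      qed
      have lb: "\<epsilon>/2 * q s - C3 * \<epsilon>^2 \<le> (je s - j0 s) + Sg s" if s: "s \<in> {0..T}" for s
      proof -
        have h1eq: "h1 s = min 1 (max 0 (- fs s * l1 s)) - \<eta>1s s" by (simp add: h1_def \<eta>1_def)
        have h2eq: "h2 s = min 1 (max 0 (- ms s * l2 s)) - \<eta>2s s" by (simp add: h2_def \<eta>2_def)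
        have Dj: "je s - j0 s = -(fe s + me s) - ((\<eta>1s s + \<epsilon>*h1 s)\<^sup>2 + (\<eta>2s s + \<epsilon>*h2 s)\<^sup>2)/2 - (-(fs s + ms s) - ((\<eta>1s s)\<^sup>2 + (\<eta>2s s)\<^sup>2)/2)"
          by (simp add: je_def j0_def \<eta>e1_def \<eta>e2_def)
        have Sgs: "Sg s = (adj1 \<beta> \<delta> K (\<eta>1s s) (fs s) (ms s) (l1 s) (l2 s) * (fe s - fs s) + l1 s * (rhs_f \<beta> \<delta> K (\<eta>1s s + \<epsilon>*h1 s) (fe s) (me s) - rhs_f \<beta> \<delta> K (\<eta>1s s) (fs s) (ms s)))
           + (adj2 \<beta> \<delta> K (\<eta>2s s) (fs s) (ms s) (l1 s) (l2 s) * (me s - ms s) + l2 s * (rhs_m \<beta> \<delta> K (\<eta>2s s + \<epsilon>*h2 s) (fe s) (me s) - rhs_m \<beta> \<delta> K (\<eta>2s s) (fs s) (ms s)))"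
          by (simp add: Sg_def a1_def a2_def zd1_def zd2_def \<eta>e1_def \<eta>e2_def)
        have "\<epsilon>/2 * ((h1 s)\<^sup>2 + (h2 s)\<^sup>2) - 2 * Lb * (\<beta>/2 * (1 + (6*B + 2*C1)/K) * C1^2 + C1) * \<epsilon>^2 \<le> (je s - j0 s) + Sg s"
          by (rule pointwise_lb[OF K \<beta> ep(1) e01 _ _ _ _ h1eq h2eq fB[OF s] mB[OF s] z1b[OF s] z2b[OF s] C10 l1b[OF s] l2b[OF s] h1b[OF s] h2b[OF s] Dj Sgs])
             (use e1b[OF s] e2b[OF s] in auto)
        then show ?thesis by (simp add: q_def C3_def)
      qed
      have "integral {0..T} (\<lambda>s. \<epsilon>/2 * q s - C3 * \<epsilon>^2) \<le> integral {0..T} (\<lambda>s. (je s - j0 s) + Sg s)"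
        by (rule integral_le) (use lb in \<open>auto intro!: MB_int MB_intros MBq MBje MBj0 MBSg\<close>)
      also have "\<dots> \<le> 0" by (rule tot)
      finally have le0: "integral {0..T} (\<lambda>s. \<epsilon>/2 * q s - C3 * \<epsilon>^2) \<le> 0" .
      have iq: "(\<lambda>s. \<epsilon>/2 * q s) integrable_on {0..T}" by (intro MB_int MB_intros MBq)
      have "integral {0..T} (\<lambda>s. \<epsilon>/2 * q s - C3 * \<epsilon>^2) = \<epsilon>/2 * integral {0..T} q - T * (C3 * \<epsilon>^2)"
        unfolding integral_diff[OF iq integrable_const_ivl] integral_mult[OF MB_int[OF MBq], symmetric]
        using T by (simp add: integral_const_real)
      then have "\<epsilon> * integral {0..T} q \<le> \<epsilon> * ((2 * C3 * T) * \<epsilon>)"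
        using le0 by (simp add: power2_eq_square algebra_simps)
      then show ?thesis using ep(1) by (rule mult_left_le_imp_le) 
    qed
    show ?thesis
      by (rule exI[of _ e0], intro conjI e0, rule exI[of _ "2 * C3 * T"]) (use C30 T main in auto)
  qed
  then obtain e0 Cq where e0: "0 < e0" and Cq: "0 \<le> Cq" and small: "\<And>\<epsilon>. 0 < \<epsilon> \<Longrightarrow> \<epsilon> \<le> e0 \<Longrightarrow> integral {0..T} q \<le> Cq * \<epsilon>"
    by blast
  have "integral {0..T} q \<le> 0" by (rule small_le_zero[OF e0 Cq small])
  then have ae: "AE t in lebesgue. t \<in> {0..T} \<longrightarrow> q t = 0" by (rule ae_zero[OF MBq qnn])
  have "AE t in lebesgue. t \<in> {0..T} \<longrightarrow>
              \<eta>1s t = min 1 (max 0 (- fs t * l1 t)) \<and>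
              \<eta>2s t = min 1 (max 0 (- ms t * l2 t))"
    using ae by (rule AE_mp) (auto simp: q_def h1_def h2_def \<eta>1_def \<eta>2_def add_nonneg_eq_0_iff)
  then show ?thesis using l1c l2c l1T l2T l1i l2i by blast
qed

end
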